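(* (i) Let $v=(v_1,\dots,v_d)$ with $v_i\in\mathcal{L}((\mathbb{R}^d))$, and let $\mathbf{X}$ be an sgrp over $\mathbb{R}^d$ on $[0,T]$. The unique solution of $$\dot{\mathbf{Z}}_t=\mathbf{Z}_t\otimes(T_v\dot{\mathbf{X}}_{t,t}),\qquad\mathbf{Z}_0=T_v\mathbf{X}_0$$ takes values in $G(\mathbb{R}^d)$, is again an sgrp, and $\mathbf{Z}_t=T_v(\mathbf{X}_t)$, $\mathbf{Z}_{s,t}=T_v(\mathbf{X}_{s,t})$. If $\mathbf{X}$ is an sgrm, applying this to $t\mapsto\mathbf{X}_{0,t}$ yields an sgrm $\mathbf{Z}$ with $\mathbf{Z}_{s,t}=T_v(\mathbf{X}_{s,t})$. (ii) Let now $v_i\in\mathcal{L}(\mathbb{R}^d)$ for all $i$ and let $\mathbf{X}$ be a good sgrm. Then $\mathbf{Z}$ from (i) is a good sgrm. More specifically, let $N'$ be the smallest integer with $v_i\in\mathcal{L}^{N'}(\mathbb{R}^d)$ for all $i$, assume $\mathbf{X}=\mathrm{MinExt}(\mathbf{Y})$ for an $N$-sgrm $\mathbf{Y}$, and let $M=N\cdot N'$. Then the unique solution of $\dot{\mathbf{W}}_t=\mathbf{W}_t\otimes_M(T_v\dot{\mathbf{Y}}_{t,t})$, $\mathbf{W}_0=\mathbf{1}$, is an $M$-sgrp; writing $\mathcal{T}_v[\mathbf{Y}]_{s,t}:=\mathbf{W}_s^{-1}\otimes_M\mathbf{W}_t$ for its associated $M$-sgrm, one has $$\mathcal{T}_v[\mathbf{Y}]_{s,t}=T_v^M(\mathbf{Y}^M_{s,t})=\mathrm{proj}_M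 T_v(\mathbf{X}_{s,t}),$$ where $T_v^M:=\mathrm{proj}_M\circ T_v\circ\mathfrak{i}^M$ is an algebra endomorphism of $(T^M(\mathbb{R}^d),\otimes_M)$, $\mathfrak{i}^M:T^M(\mathbb{R}^d)\to T((\mathbb{R}^d))$ is the linear embedding, and $\mathbf{Y}^M=\mathrm{proj}_M\mathrm{MinExt}(\mathbf{Y})$.
   Context: Fix $T>0$, $d\ge1$. $T((\mathbb{R}^d))$: formal tensor series over words in $\{1,\dots,d\}$ (incl. empty word, unit $\mathbf{1}$), concatenation $\otimes$; $\langle\mathbf{x},w\rangle$ coefficient of $w$. $T^N(\mathbb{R}^d)$: span of words of length $\le N$, quotient algebra with product $\otimes_N$, projection $\mathrm{proj}_N$. Shuffle: bilinear, unit $\mathbf{1}$, $wi\sqcup\!\sqcup vj=(w\sqcup\!\sqcup vj)i+(wi\sqcup\!\sqcup v)j$. $G(\mathbb{R}^d)$: series with $\langle\mathbf{x},\mathbf{1}\rangle=1$ and $\langle\mathbf{x},v\sqcup\!\sqcup w\rangle=\langle\mathbf{x},v\rangle\langle\mathbf{x},w\rangle$. $\mathcal{L}(\mathbb{R}^d)$ Lie polynomials generated by $e_1,\dots,e_d$; $\mathcal{L}^N(\mathbb{R}^d)=\mathrm{proj}_N\mathcal{L}(\mathbb{R}^d)$; $\mathcal{L}((\mathbb{R}^d))$ Lie series. For $v=(v_1,\dots,v_d)\subset\mathcal{L}((\mathbb{R}^d))$, $T_v$ is the $\otimes$-algebra endomorphism of $T((\mathbb{R}^d))$ (continuous for coordinatewise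 convergence) extending $e_i\mapsto e_i+v_i$. $N$-sgrp: non-zero path $\mathbf{X}:[0,T]\to T^N(\mathbb{R}^d)$ with $\langle\mathbf{X}_t,v\sqcup\!\sqcup w\rangle=\langle\mathbf{X}_t,v\rangle\langle\mathbf{X}_t,w\rangle$ ($|v|+|w|\le N$) and smooth coordinates; sgrp: same in $T((\mathbb{R}^d))$ for all words. $N$-sgrm: non-zero $\mathbf{X}:[0,T]^2\to T^N(\mathbb{R}^d)$ with the shuffle relation for each $\mathbf{X}_{s,t}$, $\mathbf{X}_{s,u}\otimes_N\mathbf{X}_{u,t}=\mathbf{X}_{s,t}$, and smooth $t\mapsto\langle\mathbf{X}_{s,t},w\rangle$; sgrm: same in $T((\mathbb{R}^d))$ with $\otimes$. A path determines a model via $\mathbf{X}_{s,t}=\mathbf{X}_s^{-1}\otimes\mathbf{X}_t$ (resp. $\otimes_N$). Diagonal derivative $\dot{\mathbf{X}}_{s,s}=\partial_t|_{t=s}\mathbf{X}_{s,t}$. $\mathrm{MinExt}(\mathbf{Y})$ of an $N$-sgrm $\mathbf{Y}$: the unique sgrm agreeing with $\mathbf{Y}$ on words of length $\le N$ with diagonal derivative in $\mathcal{L}^N(\mathbb{R}^d)$ for all times. An sgrm is good if it equals $\mathrm{MinExt}(\mathbf{Y})$ for some $N$ and some $N$-sgrm $\mathbf{Y}$. *)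

theory Defs
  imports "HOL-Analysis.Analysis"
begin

text \<open>Words over the alphabet {1..d} are lists of naturals; a (formal) tensor series
  is a coefficient function on words.  Series over R^d vanish on words with a letter
  outside {1..d}.\<close>

type_synonym word = "nat list"
type_synonym tseries = "nat list \<Rightarrow> real"

definition words :: "nat \<Rightarrow> word set" where
  "words d = {w. set w \<subseteq> {1..d}}"

definition tser :: "nat \<Rightarrow> tseries \<Rightarrow> bool" where
  "tser d x \<longleftrightarrow> (\<forall>w. w \<notin> words d \<longrightarrow> x w = 0)"

definition tzero :: tseries where
  "tzero = (\<lambda>w. 0)"

definition tunit :: tseries where
  "tunit = (\<lambda>w. if w = [] then 1 else 0)"

definition letter :: "nat \<Rightarrow> tseries" where
  "letter i = (\<lambda>w. if w = [i] then 1 else 0)"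

definition trunc :: "nat \<Rightarrow> tseries \<Rightarrow> tseries" where
  "trunc N x = (\<lambda>w. if length w \<le> N then x w else 0)"

definition inTN :: "nat \<Rightarrow> nat \<Rightarrow> tseries \<Rightarrow> bool" where
  "inTN d N x \<longleftrightarrow> tser d x \<and> (\<forall>w. N < length w \<longrightarrow> x w = 0)"

definition tmul :: "tseries \<Rightarrow> tseries \<Rightarrow> tseries" where
  "tmul x y = (\<lambda>w. \<Sum>i\<le>length w. x (take i w) * y (drop i w))"

definition tmulN :: "nat \<Rightarrow> tseries \<Rightarrow> tseries \<Rightarrow> tseries" where
  "tmulN N x y = trunc N (tmul x y)"

fun tprod :: "tseries list \<Rightarrow> tseries" where
  "tprod [] = tunit"
| "tprod (x # xs) = tmul x (tprod xs)"

definition tpow :: "tseries \<Rightarrow> nat \<Rightarrow> tseries" where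
  "tpow x k = tprod (replicate k x)"

text \<open>inverse of a series with constant term 1: sum_k (1 - x)^k\<close>
definition tinv :: "tseries \<Rightarrow> tseries" where
  "tinv x = (\<lambda>w. \<Sum>k\<le>length w. tpow (\<lambda>u. tunit u - x u) k w)"

text \<open>Shuffle product of two words, as the list (multiset) of resulting words.\<close>
fun shuf :: "word \<Rightarrow> word \<Rightarrow> word list" where
  "shuf [] w = [w]"
| "shuf v [] = [v]"
| "shuf (a # v) (b # w) = map ((#) a) (shuf v (b # w)) @ map ((#) b) (shuf (a # v) w)"

definition spair :: "tseries \<Rightarrow> word \<Rightarrow> word \<Rightarrow> real" where
  "spair x v w = sum_list (map x (shuf v w))"

definition grouplike :: "nat \<Rightarrow> tseries \<Rightarrow> bool" where
  "grouplike d x \<longleftrightarrow> tser d x \<and> x [] = 1 \<and>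
     (\<forall>v\<in>words d. \<forall>w\<in>words d. spair x v w = x v * x w)"

inductive_set lie_poly :: "nat \<Rightarrow> tseries set" for d :: nat where
  lp_gen: "1 \<le> i \<Longrightarrow> i \<le> d \<Longrightarrow> letter i \<in> lie_poly d"
| lp_zero: "tzero \<in> lie_poly d"
| lp_add: "x \<in> lie_poly d \<Longrightarrow> y \<in> lie_poly d \<Longrightarrow> (\<lambda>w. x w + y w) \<in> lie_poly d"
| lp_scale: "x \<in> lie_poly d \<Longrightarrow> (\<lambda>w. c * x w) \<in> lie_poly d"
| lp_bracket: "x \<in> lie_poly d \<Longrightarrow> y \<in> lie_poly d \<Longrightarrow>
     (\<lambda>w. tmul x y w - tmul y x w) \<in> lie_poly d"

definition hcomp :: "nat \<Rightarrow> tseries \<Rightarrow> tseries" where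
  "hcomp n x = (\<lambda>w. if length w = n then x w else 0)"

definition lie_series :: "nat \<Rightarrow> tseries \<Rightarrow> bool" where
  "lie_series d x \<longleftrightarrow> tser d x \<and> (\<forall>n. hcomp n x \<in> lie_poly d)"

definition lie_truncN :: "nat \<Rightarrow> nat \<Rightarrow> tseries set" where
  "lie_truncN d N = trunc N ` lie_poly d"

text \<open>T_v: the continuous algebra endomorphism extending e_i |-> e_i + v_i.  Since the
  v_i are Lie series (no constant term), the coefficient of u in T_v(e_w) vanishes
  for length w > length u, giving this explicit formula.\<close>
definition Tv :: "nat \<Rightarrow> (nat \<Rightarrow> tseries) \<Rightarrow> tseries \<Rightarrow> tseries" where
  "Tv d v x = (\<lambda>u. \<Sum>w\<in>{w\<in>words d. length w \<le> length u}.
       x w * tprod (map (\<lambda>i. (\<lambda>u'. letter i u' + v i u')) w) u)"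

text \<open>T_v^M = proj_M o T_v o i^M (i^M is the identity on representatives)\<close>
definition TvM :: "nat \<Rightarrow> (nat \<Rightarrow> tseries) \<Rightarrow> nat \<Rightarrow> tseries \<Rightarrow> tseries" where
  "TvM d v M y = trunc M (Tv d v y)"

definition smooth_on :: "real set \<Rightarrow> (real \<Rightarrow> real) \<Rightarrow> bool" where
  "smooth_on S g \<longleftrightarrow> (\<exists>f. f 0 = g \<and>
     (\<forall>k. \<forall>t\<in>S. (f k has_real_derivative f (Suc k) t) (at t within S)))"

definition Nsgrp :: "nat \<Rightarrow> real \<Rightarrow> nat \<Rightarrow> (real \<Rightarrow> tseries) \<Rightarrow> bool" where
  "Nsgrp d T N X \<longleftrightarrow>
     (\<forall>t\<in>{0..T}. inTN d N (X t) \<and> X t \<noteq> tzero \<and>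
        (\<forall>v\<in>words d. \<forall>w\<in>words d. length v + length w \<le> N \<longrightarrow>
            spair (X t) v w = X t v * X t w)) \<and>
     (\<forall>w. smooth_on {0..T} (\<lambda>t. X t w))"

definition sgrp :: "nat \<Rightarrow> real \<Rightarrow> (real \<Rightarrow> tseries) \<Rightarrow> bool" where
  "sgrp d T X \<longleftrightarrow>
     (\<forall>t\<in>{0..T}. tser d (X t) \<and> X t \<noteq> tzero \<and>
        (\<forall>v\<in>words d. \<forall>w\<in>words d. spair (X t) v w = X t v * X t w)) \<and>
     (\<forall>w. smooth_on {0..T} (\<lambda>t. X t w))"

definition Nsgrm :: "nat \<Rightarrow> real \<Rightarrow> nat \<Rightarrow> (real \<Rightarrow> real \<Rightarrow> tseries) \<Rightarrow> bool" where
  "Nsgrm d T N X \<longleftrightarrow>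
     (\<forall>s\<in>{0..T}. \<forall>t\<in>{0..T}. inTN d N (X s t) \<and> X s t \<noteq> tzero \<and>
        (\<forall>v\<in>words d. \<forall>w\<in>words d. length v + length w \<le> N \<longrightarrow>
            spair (X s t) v w = X s t v * X s t w)) \<and>
     (\<forall>s\<in>{0..T}. \<forall>u\<in>{0..T}. \<forall>t\<in>{0..T}. tmulN N (X s u) (X u t) = X s t) \<and>
     (\<forall>s\<in>{0..T}. \<forall>w. smooth_on {0..T} (\<lambda>t. X s t w))"

definition sgrm :: "nat \<Rightarrow> real \<Rightarrow> (real \<Rightarrow> real \<Rightarrow> tseries) \<Rightarrow> bool" where
  "sgrm d T X \<longleftrightarrow>
     (\<forall>s\<in>{0..T}. \<forall>t\<in>{0..T}. tser d (X s t) \<and> X s t \<noteq> tzero \<and>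
        (\<forall>v\<in>words d. \<forall>w\<in>words d. spair (X s t) v w = X s t v * X s t w)) \<and>
     (\<forall>s\<in>{0..T}. \<forall>u\<in>{0..T}. \<forall>t\<in>{0..T}. tmul (X s u) (X u t) = X s t) \<and>
     (\<forall>s\<in>{0..T}. \<forall>w. smooth_on {0..T} (\<lambda>t. X s t w))"

definition path_model :: "(real \<Rightarrow> tseries) \<Rightarrow> real \<Rightarrow> real \<Rightarrow> tseries" where
  "path_model X s t = tmul (tinv (X s)) (X t)"

definition path_modelN :: "nat \<Rightarrow> (real \<Rightarrow> tseries) \<Rightarrow> real \<Rightarrow> real \<Rightarrow> tseries" where
  "path_modelN N X s t = tmulN N (trunc N (tinv (X s))) (X t)"

definition ddiag :: "real \<Rightarrow> (real \<Rightarrow> real \<Rightarrow> tseries) \<Rightarrow> real \<Rightarrow> tseries" where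
  "ddiag T X s = (\<lambda>w. THE D. ((\<lambda>t. X s t w) has_real_derivative D) (at s within {0..T}))"

definition is_MinExt :: "nat \<Rightarrow> real \<Rightarrow> nat \<Rightarrow> (real \<Rightarrow> real \<Rightarrow> tseries)
    \<Rightarrow> (real \<Rightarrow> real \<Rightarrow> tseries) \<Rightarrow> bool" where
  "is_MinExt d T N Y X \<longleftrightarrow> sgrm d T X \<and>
     (\<forall>s\<in>{0..T}. \<forall>t\<in>{0..T}. \<forall>w. length w \<le> N \<longrightarrow> X s t w = Y s t w) \<and>
     (\<forall>s\<in>{0..T}. ddiag T X s \<in> lie_truncN d N)"

definition good :: "nat \<Rightarrow> real \<Rightarrow> (real \<Rightarrow> real \<Rightarrow> tseries) \<Rightarrow> bool" where
  "good d T X \<longleftrightarrow> (\<exists>N Y. Nsgrm d T N Y \<and> is_MinExt d T N Y X)"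

definition ode_sol :: "nat \<Rightarrow> real \<Rightarrow> (real \<Rightarrow> tseries) \<Rightarrow> tseries \<Rightarrow> (real \<Rightarrow> tseries) \<Rightarrow> bool" where
  "ode_sol d T A Z0 Z \<longleftrightarrow> (\<forall>t\<in>{0..T}. tser d (Z t)) \<and> Z 0 = Z0 \<and>
     (\<forall>t\<in>{0..T}. \<forall>w. ((\<lambda>s. Z s w) has_real_derivative tmul (Z t) (A t) w) (at t within {0..T}))"

definition ode_solN :: "nat \<Rightarrow> real \<Rightarrow> nat \<Rightarrow> (real \<Rightarrow> tseries) \<Rightarrow> tseries \<Rightarrow> (real \<Rightarrow> tseries) \<Rightarrow> bool" where
  "ode_solN d T M A W0 W \<longleftrightarrow> (\<forall>t\<in>{0..T}. inTN d M (W t)) \<and> W 0 = W0 \<and>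
     (\<forall>t\<in>{0..T}. \<forall>w. ((\<lambda>s. W s w) has_real_derivative tmulN M (W t) (A t) w) (at t within {0..T}))"

end

theory Submission
  imports Defs
begin


definition sh :: "nat \<Rightarrow> tseries \<Rightarrow> tseries" where
  "sh a x = (\<lambda>p. x (a # p))"

lemma tmul_Nil[simp]: "tmul x y [] = x [] * y []"
  by (simp add: tmul_def)

lemma tmul_Cons: "tmul x y (a # w) = x [] * y (a # w) + tmul (sh a x) y w"
  unfolding tmul_def sh_def
  by (simp add: sum.atMost_Suc_shift del: sum.atMost_Suc)

lemma tmul_lin_left: "tmul (\<lambda>p. a * x p + b * y p) z w = a * tmul x z w + b * tmul y z w"
  unfolding tmul_def by (simp add: algebra_simps sum.distrib sum_distrib_left)

lemma tmul_lin_right: "tmul z (\<lambda>p. a * x p + b * y p) w = a * tmul z x w + b * tmul z y w"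
  unfolding tmul_def by (simp add: algebra_simps sum.distrib sum_distrib_left)

lemma tmul_sum_left: "tmul (\<lambda>p. \<Sum>i\<in>I. f i p) z w = (\<Sum>i\<in>I. tmul (f i) z w)"
  unfolding tmul_def by (simp add: sum_distrib_right sum.swap[of _ I])

lemma tmul_sum_right: "tmul z (\<lambda>p. \<Sum>i\<in>I. f i p) w = (\<Sum>i\<in>I. tmul z (f i) w)"
  unfolding tmul_def by (simp add: sum_distrib_left sum.swap[of _ I])

lemma tmul_diff_left: "tmul (\<lambda>p. x p - y p) z w = tmul x z w - tmul y z w"
  unfolding tmul_def by (simp add: algebra_simps sum_subtractf)

lemma tmul_diff_right: "tmul z (\<lambda>p. x p - y p) w = tmul z x w - tmul z y w"
  unfolding tmul_def by (simp add: algebra_simps sum_subtractf)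

lemma tmul_zero_left[simp]: "tmul (\<lambda>p. 0) z w = 0"
  unfolding tmul_def by simp

lemma tmul_zero_right[simp]: "tmul z (\<lambda>p. 0) w = 0"
  unfolding tmul_def by simp

lemma sh_tmul: "sh a (tmul x y) = (\<lambda>p. x [] * y (a # p) + tmul (sh a x) y p)"
  unfolding sh_def[of a "tmul x y"] by (simp add: tmul_Cons)

lemma tmul_assoc: "tmul (tmul x y) z w = tmul x (tmul y z) w"
proof (induction w arbitrary: x)
  case Nil
  then show ?case by simp
next
  case (Cons a w)
  have "tmul (tmul x y) z (a # w) = x [] * y [] * z (a # w) + tmul (sh a (tmul x y)) z w"
    by (simp add: tmul_Cons)
  also have "tmul (sh a (tmul x y)) z w = x [] * tmul (sh a y) z w + tmul (tmul (sh a x) y) z w"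
    unfolding sh_tmul using tmul_lin_left[of "x []" "sh a y" 1 "tmul (sh a x) y" z w]
    by (simp add: sh_def)
  also have "tmul (tmul (sh a x) y) z w = tmul (sh a x) (tmul y z) w" by (rule Cons.IH)
  finally show ?case by (simp add: tmul_Cons algebra_simps)
qed

lemma tmul_unit_left[simp]: "tmul tunit x = x"
proof
  fix w show "tmul tunit x w = x w"
    by (cases w) (auto simp: tmul_Cons tunit_def sh_def)
qed

lemma tmul_unit_right[simp]: "tmul x tunit = x"
proof
  fix w show "tmul x tunit w = x w"
  proof (induction w arbitrary: x)
    case Nil then show ?case by (simp add: tunit_def)
  next
    case (Cons a w) then show ?case by (simp add: tmul_Cons tunit_def sh_def)
  qed
qed

lemma tmul_local:
  assumes "\<And>p. length p \<le> length w \<Longrightarrow> x p = x' p"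
      and "\<And>p. length p \<le> length w \<Longrightarrow> y p = y' p"
  shows "tmul x y w = tmul x' y' w"
  unfolding tmul_def using assms by (intro sum.cong) auto

lemma tmul_local_strict:
  assumes "q [] = 0" and "\<And>p. length p < length w \<Longrightarrow> y p = y' p"
  shows "tmul q y w = tmul q y' w"
  unfolding tmul_def
proof (intro sum.cong refl)
  fix i assume "i \<in> {..length w}"
  show "q (take i w) * y (drop i w) = q (take i w) * y' (drop i w)"
  proof (cases "i = 0")
    case True then show ?thesis using assms(1) by simp
  next
    case False
    then have "length (drop i w) < length w \<or> w = []" by auto
    then show ?thesis using assms by auto
  qed
qed

lemma words_Cons[simp]: "(a # w \<in> words d) = (a \<in> {1..d} \<and> w \<in> words d)"
  by (auto simp: words_def)

lemma words_Nil[simp]: "[] \<in> words d"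
  by (auto simp: words_def)

lemma words_append[simp]: "(u @ w \<in> words d) = (u \<in> words d \<and> w \<in> words d)"
  by (auto simp: words_def)

lemma tser_tmul: "tser d x \<Longrightarrow> tser d y \<Longrightarrow> tser d (tmul x y)"
  unfolding tser_def tmul_def
proof (intro allI impI sum.neutral ballI)
  fix w i assume x: "\<forall>w. w \<notin> words d \<longrightarrow> x w = 0" and y: "\<forall>w. w \<notin> words d \<longrightarrow> y w = 0"
    and w: "w \<notin> words d"
  have "take i w \<notin> words d \<or> drop i w \<notin> words d"
    using w words_append[of "take i w" "drop i w" d] by simp
  then show "x (take i w) * y (drop i w) = 0" using x y by auto
qed

lemma tser_tunit[simp]: "tser d tunit"
  by (simp add: tser_def tunit_def)




lemma tpow_0[simp]: "tpow a 0 = tunit" by (simp add: tpow_def)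
lemma tpow_Suc: "tpow a (Suc k) = tmul a (tpow a k)" by (simp add: tpow_def)

lemma tpow_small: "a [] = 0 \<Longrightarrow> length w < k \<Longrightarrow> tpow a k w = 0"
proof (induction k arbitrary: w)
  case 0 then show ?case by simp
next
  case (Suc k)
  show ?case unfolding tpow_Suc tmul_def
  proof (intro sum.neutral ballI)
    fix i assume "i \<in> {..length w}"
    show "a (take i w) * tpow a k (drop i w) = 0"
    proof (cases "i = 0")
      case True then show ?thesis using Suc.prems by simp
    next
      case False
      moreover have "i \<le> length w" using \<open>i \<in> {..length w}\<close> by simp
      ultimately have "length (drop i w) < k" using Suc.prems by auto
      then show ?thesis using Suc.IH[OF Suc.prems(1)] by simp
    qed
  qed
qed

lemma tpow_Suc': "tpow a (Suc k) = tmul (tpow a k) a"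
proof (induction k)
  case 0 then show ?case by (simp add: tpow_Suc)
next
  case (Suc k)
  show ?case
  proof
    fix w
    have "tpow a (Suc (Suc k)) w = tmul a (tmul (tpow a k) a) w" by (simp only: tpow_Suc[of a "Suc k"] Suc.IH)
    also have "\<dots> = tmul (tmul a (tpow a k)) a w" by (simp add: tmul_assoc)
    finally show "tpow a (Suc (Suc k)) w = tmul (tpow a (Suc k)) a w" by (simp add: tpow_Suc)
  qed
qed

lemma tpow_local:
  assumes "\<And>p. length p \<le> n \<Longrightarrow> a p = b p" "length w \<le> n"
  shows "tpow a k w = tpow b k w"
  using assms(2)
proof (induction k arbitrary: w)
  case 0 then show ?case by simp
next
  case (Suc k)
  show ?case unfolding tpow_Suc
    by (rule tmul_local) (use assms(1) Suc in auto)
qed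

definition Sinv :: "tseries \<Rightarrow> nat \<Rightarrow> tseries" where
  "Sinv x n = (\<lambda>w. \<Sum>k\<le>n. tpow (\<lambda>u. tunit u - x u) k w)"

lemma tinv_Sinv:
  assumes "x [] = 1" "length w \<le> n"
  shows "tinv x w = Sinv x n w"
proof -
  have "Sinv x n w = (\<Sum>k\<le>length w. tpow (\<lambda>u. tunit u - x u) k w)"
    unfolding Sinv_def
    by (rule sum.mono_neutral_right) (use assms in \<open>auto intro!: tpow_small simp: tunit_def\<close>)
  then show ?thesis by (simp add: tinv_def)
qed

lemma tinv_right:
  assumes "x [] = 1"
  shows "tmul x (tinv x) = tunit"
proof
  fix w :: word
  define a where "a = (\<lambda>u. tunit u - x u)"
  have a0: "a [] = 0" using assms by (simp add: a_def tunit_def)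
  define n where "n = length w"
  have "tmul x (tinv x) w = tmul x (Sinv x n) w"
    by (rule tmul_local) (use assms in \<open>auto simp: n_def intro: tinv_Sinv\<close>)
  also have "tmul x (Sinv x n) w = Sinv x n w - tmul a (Sinv x n) w"
    using tmul_diff_left[of tunit a "Sinv x n" w] unfolding a_def by simp
  also have "tmul a (Sinv x n) w = (\<Sum>k\<le>n. tpow a (Suc k) w)"
    unfolding Sinv_def a_def[symmetric] tmul_sum_right tpow_Suc ..
  also have "Sinv x n w = (\<Sum>k\<le>n. tpow a k w)" by (simp add: Sinv_def a_def)
  also have "(\<Sum>k\<le>n. tpow a k w) - (\<Sum>k\<le>n. tpow a (Suc k) w) = tpow a 0 w - tpow a (Suc n) w"
    by (induction n) auto
  also have "tpow a (Suc n) w = 0" using a0 by (intro tpow_small) (auto simp: n_def)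
  finally show "tmul x (tinv x) w = tunit w" by simp
qed

lemma tinv_left:
  assumes "x [] = 1"
  shows "tmul (tinv x) x = tunit"
proof
  fix w :: word
  define a where "a = (\<lambda>u. tunit u - x u)"
  have a0: "a [] = 0" using assms by (simp add: a_def tunit_def)
  define n where "n = length w"
  have "tmul (tinv x) x w = tmul (Sinv x n) x w"
    by (rule tmul_local) (use assms in \<open>auto simp: n_def intro: tinv_Sinv\<close>)
  also have "tmul (Sinv x n) x w = Sinv x n w - tmul (Sinv x n) a w"
    using tmul_diff_right[of "Sinv x n" tunit a w] unfolding a_def by simp
  also have "tmul (Sinv x n) a w = (\<Sum>k\<le>n. tpow a (Suc k) w)"
    unfolding Sinv_def a_def[symmetric] tmul_sum_left tpow_Suc' ..
  also have "Sinv x n w = (\<Sum>k\<le>n. tpow a k w)" by (simp add: Sinv_def a_def)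
  also have "(\<Sum>k\<le>n. tpow a k w) - (\<Sum>k\<le>n. tpow a (Suc k) w) = tpow a 0 w - tpow a (Suc n) w"
    by (induction n) auto
  also have "tpow a (Suc n) w = 0" using a0 by (intro tpow_small) (auto simp: n_def)
  finally show "tmul (tinv x) x w = tunit w" by simp
qed

lemma tmul_assoc_fun: "tmul (tmul x y) z = tmul x (tmul y z)"
  by (rule ext) (rule tmul_assoc)

lemma tinv_unique_left:
  assumes "x [] = 1" "tmul y x = tunit"
  shows "y = tinv x"
proof -
  have "y = tmul y (tmul x (tinv x))" using tinv_right[of x] assms(1) by simp
  also have "\<dots> = tmul (tmul y x) (tinv x)" by (simp add: tmul_assoc_fun)
  finally show ?thesis using assms(2) by simp
qed

lemma tinv_Nil: "x [] = 1 \<Longrightarrow> tinv x [] = 1"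
  by (simp add: tinv_def tunit_def)

lemma tpow_tser: "tser d a \<Longrightarrow> tser d (tpow a k)"
  by (induction k) (auto simp: tpow_Suc intro: tser_tmul)

lemma tser_tinv: "tser d x \<Longrightarrow> tser d (tinv x)"
proof -
  assume x: "tser d x"
  have "tser d (\<lambda>u. tunit u - x u)" using x by (auto simp: tser_def tunit_def)
  then have "tser d (tpow (\<lambda>u. tunit u - x u) k)" for k by (rule tpow_tser)
  then show ?thesis unfolding tser_def tinv_def by auto
qed

lemma tinv_local:
  assumes "\<And>p. length p \<le> length w \<Longrightarrow> x p = y p"
  shows "tinv x w = tinv y w"
  unfolding tinv_def
  by (intro sum.cong refl tpow_local[where n="length w"]) (use assms in auto)

lemma trunc_apply: "trunc M x w = (if length w \<le> M then x w else 0)"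
  by (simp add: trunc_def)

lemma trunc_tinv: "trunc M (tinv (trunc M x)) = trunc M (tinv x)"
  unfolding trunc_def by (auto intro!: ext tinv_local)

lemma trunc_tmul: "trunc M (tmul (trunc M x) (trunc M y)) = trunc M (tmul x y)"
  unfolding trunc_def[of M "tmul _ _"] by (auto intro!: ext tmul_local simp: trunc_def)

lemma trunc_tmul_left: "trunc M (tmul (trunc M x) y) = trunc M (tmul x y)"
  unfolding trunc_def[of M "tmul _ _"] by (auto intro!: ext tmul_local simp: trunc_def)

lemma trunc_tmul_right: "trunc M (tmul x (trunc M y)) = trunc M (tmul x y)"
  unfolding trunc_def[of M "tmul _ _"] by (auto intro!: ext tmul_local simp: trunc_def)




definition vok :: "nat \<Rightarrow> (nat \<Rightarrow> tseries) \<Rightarrow> bool" where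
  "vok d v \<longleftrightarrow> (\<forall>i\<in>{1..d}. tser d (v i) \<and> v i [] = 0)"

definition qv :: "(nat \<Rightarrow> tseries) \<Rightarrow> nat \<Rightarrow> tseries" where
  "qv v i = (\<lambda>u'. letter i u' + v i u')"

definition Pw :: "(nat \<Rightarrow> tseries) \<Rightarrow> word \<Rightarrow> tseries" where
  "Pw v a = tprod (map (\<lambda>i. (\<lambda>u'. letter i u' + v i u')) a)"

definition B :: "nat \<Rightarrow> nat \<Rightarrow> word set" where
  "B d n = {w\<in>words d. length w \<le> n}"

lemma Tv_B: "Tv d v x u = (\<Sum>a\<in>B d (length u). x a * Pw v a u)"
  by (simp add: Tv_def B_def Pw_def)

lemma finite_B[simp]: "finite (B d n)"
proof -
  have "B d n = {xs. set xs \<subseteq> {1..d} \<and> length xs \<le> n}" by (auto simp: B_def words_def)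
  then show ?thesis using finite_lists_length_le[of "{1..d}" n] by simp
qed

lemma B_0: "B d 0 = {[]}" by (auto simp: B_def)

lemma B_Suc: "B d (Suc n) = insert [] (\<Union>i\<in>{1..d}. (#) i ` B d n)"
proof (intro set_eqI iffI)
  fix w assume "w \<in> B d (Suc n)"
  then show "w \<in> insert [] (\<Union>i\<in>{1..d}. (#) i ` B d n)"
    by (cases w) (auto simp: B_def)
qed (auto simp: B_def)

lemma sum_B_Suc: "(\<Sum>a\<in>B d (Suc n). f a) = f [] + (\<Sum>i\<in>{1..d}. \<Sum>a\<in>B d n. f (i # a))"
proof -
  have "(\<Sum>a\<in>B d (Suc n). f a) = f [] + (\<Sum>a\<in>(\<Union>i\<in>{1..d}. (#) i ` B d n). f a)"
    unfolding B_Suc by (subst sum.insert) auto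
  also have "(\<Sum>a\<in>(\<Union>i\<in>{1..d}. (#) i ` B d n). f a) = (\<Sum>i\<in>{1..d}. \<Sum>a\<in>(#) i ` B d n. f a)"
    by (rule sum.UNION_disjoint) auto
  also have "\<dots> = (\<Sum>i\<in>{1..d}. \<Sum>a\<in>B d n. f (i # a))"
  proof (rule sum.cong[OF refl])
    fix i show "sum f ((#) i ` B d n) = (\<Sum>a\<in>B d n. f (i # a))"
      by (subst sum.reindex) (auto simp: inj_on_def)
  qed
  finally show ?thesis .
qed

lemma B_mono: "m \<le> n \<Longrightarrow> B d m \<subseteq> B d n" by (auto simp: B_def)

lemma Pw_Nil[simp]: "Pw v [] = tunit" by (simp add: Pw_def)
lemma Pw_Cons: "Pw v (i # a) = tmul (qv v i) (Pw v a)" by (simp add: Pw_def qv_def)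

lemma qv_Nil: "vok d v \<Longrightarrow> i \<in> {1..d} \<Longrightarrow> qv v i [] = 0"
  by (simp add: vok_def qv_def letter_def)

lemma tser_letter: "i \<in> {1..d} \<Longrightarrow> tser d (letter i)"
  by (auto simp: tser_def letter_def)

lemma tser_qv: "vok d v \<Longrightarrow> i \<in> {1..d} \<Longrightarrow> tser d (qv v i)"
  using tser_letter[of i d] by (auto simp: vok_def qv_def tser_def)

lemma tser_Pw: "vok d v \<Longrightarrow> a \<in> words d \<Longrightarrow> tser d (Pw v a)"
  by (induction a) (auto simp: Pw_Cons intro!: tser_tmul tser_qv)

lemma Pw_small: "vok d v \<Longrightarrow> a \<in> words d \<Longrightarrow> length u < length a \<Longrightarrow> Pw v a u = 0"
proof (induction a arbitrary: u)
  case Nil then show ?case by simp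
next
  case (Cons i a)
  show ?case unfolding Pw_Cons tmul_def
  proof (intro sum.neutral ballI)
    fix j assume j: "j \<in> {..length u}"
    show "qv v i (take j u) * Pw v a (drop j u) = 0"
    proof (cases "j = 0")
      case True then show ?thesis using qv_Nil Cons.prems by auto
    next
      case False then show ?thesis using Cons j by auto
    qed
  qed
qed

lemma Tv_eq:
  assumes "vok d v" "length u \<le> n"
  shows "Tv d v x u = (\<Sum>a\<in>B d n. x a * Pw v a u)"
  unfolding Tv_B
  by (rule sum.mono_neutral_left[OF finite_B]) (use assms in \<open>auto simp: B_def intro!: Pw_small\<close>)

lemma Tv_Nil[simp]: "Tv d v x [] = x []"
  by (simp add: Tv_B B_0 tunit_def)

lemma Tv_lin: "Tv d v (\<lambda>p. a * x p + b * y p) u = a * Tv d v x u + b * Tv d v y u"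
  unfolding Tv_B by (simp add: algebra_simps sum.distrib sum_distrib_left)

lemma Tv_diff: "Tv d v (\<lambda>p. x p - y p) u = Tv d v x u - Tv d v y u"
  unfolding Tv_B by (simp add: algebra_simps sum_subtractf)

lemma Tv_sum: "Tv d v (\<lambda>p. \<Sum>i\<in>I. f i p) u = (\<Sum>i\<in>I. Tv d v (f i) u)"
  unfolding Tv_B by (simp add: sum_distrib_right sum.swap[of _ I])

lemma Tv_scale: "Tv d v (\<lambda>p. a * x p) u = a * Tv d v x u"
  unfolding Tv_B by (simp add: sum_distrib_left algebra_simps)

lemma Tv_zero[simp]: "Tv d v (\<lambda>p. 0) = (\<lambda>p. 0)"
  unfolding Tv_B by simp

lemma Tv_tunit[simp]: "Tv d v tunit = tunit"
proof
  fix u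
  have "Tv d v tunit u = (\<Sum>a\<in>B d (length u). (if a = [] then Pw v a u else 0))"
    unfolding Tv_B by (intro sum.cong) (auto simp: tunit_def)
  also have "\<dots> = Pw v [] u" by (subst sum.delta[OF finite_B]) (auto simp: B_def)
  finally show "Tv d v tunit u = tunit u" by simp
qed

lemma tser_Tv: "vok d v \<Longrightarrow> tser d (Tv d v x)"
  unfolding Tv_B tser_def using tser_Pw
  by (auto simp: B_def tser_def intro!: sum.neutral)

lemma Tv_rec:
  assumes "vok d v"
  shows "Tv d v x u = x [] * tunit u + (\<Sum>i\<in>{1..d}. tmul (qv v i) (Tv d v (sh i x)) u)"
proof -
  have "Tv d v x u = (\<Sum>a\<in>B d (Suc (length u)). x a * Pw v a u)"
    by (rule Tv_eq[OF assms]) simp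
  also have "\<dots> = x [] * tunit u + (\<Sum>i\<in>{1..d}. \<Sum>a\<in>B d (length u). x (i # a) * tmul (qv v i) (Pw v a) u)"
    by (simp add: sum_B_Suc Pw_Cons)
  also have "(\<Sum>i\<in>{1..d}. \<Sum>a\<in>B d (length u). x (i # a) * tmul (qv v i) (Pw v a) u)
      = (\<Sum>i\<in>{1..d}. tmul (qv v i) (Tv d v (sh i x)) u)"
  proof (intro sum.cong refl)
    fix i
    have "(\<Sum>a\<in>B d (length u). x (i # a) * tmul (qv v i) (Pw v a) u)
        = tmul (qv v i) (\<lambda>p. \<Sum>a\<in>B d (length u). x (i # a) * Pw v a p) u"
      unfolding tmul_sum_right using tmul_lin_right[of "qv v i" _ _ 0 "\<lambda>p. 0"]
      by simp
    also have "\<dots> = tmul (qv v i) (Tv d v (sh i x)) u"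
      by (rule tmul_local) (auto simp: Tv_eq[OF assms] sh_def)
    finally show "(\<Sum>a\<in>B d (length u). x (i # a) * tmul (qv v i) (Pw v a) u)
        = tmul (qv v i) (Tv d v (sh i x)) u" .
  qed
  finally show ?thesis .
qed

lemma Tv_mult_pt:
  assumes "vok d v"
  shows "Tv d v (tmul x y) u = tmul (Tv d v x) (Tv d v y) u"
proof (induction "length u" arbitrary: u x rule: less_induct)
  case less
  have step: "tmul (qv v i) (Tv d v (sh i (tmul x y))) u
      = x [] * tmul (qv v i) (Tv d v (sh i y)) u + tmul (tmul (qv v i) (Tv d v (sh i x))) (Tv d v y) u"
    if i: "i \<in> {1..d}" for i
  proof -
    have "tmul (qv v i) (Tv d v (sh i (tmul x y))) u
        = tmul (qv v i) (\<lambda>p. x [] * Tv d v (sh i y) p + 1 * tmul (Tv d v (sh i x)) (Tv d v y) p) u"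
    proof (rule tmul_local_strict)
      show "qv v i [] = 0" using qv_Nil[OF assms i] .
      fix p :: word assume p: "length p < length u"
      have "Tv d v (sh i (tmul x y)) p = Tv d v (\<lambda>p. x [] * sh i y p + 1 * tmul (sh i x) y p) p"
        by (simp add: sh_def tmul_Cons)
      also have "\<dots> = x [] * Tv d v (sh i y) p + 1 * Tv d v (tmul (sh i x) y) p"
        by (rule Tv_lin)
      also have "Tv d v (tmul (sh i x) y) p = tmul (Tv d v (sh i x)) (Tv d v y) p"
        using less p by blast
      finally show "Tv d v (sh i (tmul x y)) p = x [] * Tv d v (sh i y) p + 1 * tmul (Tv d v (sh i x)) (Tv d v y) p" .
    qed
    also have "\<dots> = x [] * tmul (qv v i) (Tv d v (sh i y)) u + tmul (tmul (qv v i) (Tv d v (sh i x))) (Tv d v y) u"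
      using tmul_lin_right[of "qv v i" "x []" "Tv d v (sh i y)" 1 "tmul (Tv d v (sh i x)) (Tv d v y)" u]
      by (simp add: tmul_assoc)
    finally show ?thesis .
  qed
  have "Tv d v (tmul x y) u = x [] * y [] * tunit u
      + (\<Sum>i\<in>{1..d}. x [] * tmul (qv v i) (Tv d v (sh i y)) u + tmul (tmul (qv v i) (Tv d v (sh i x))) (Tv d v y) u)"
    by (simp add: Tv_rec[OF assms, of "tmul x y"] step)
  also have "\<dots> = x [] * (y [] * tunit u + (\<Sum>i\<in>{1..d}. tmul (qv v i) (Tv d v (sh i y)) u))
      + tmul (\<lambda>p. \<Sum>i\<in>{1..d}. tmul (qv v i) (Tv d v (sh i x)) p) (Tv d v y) u"
    by (simp add: sum.distrib sum_distrib_left tmul_sum_left algebra_simps)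
  also have "y [] * tunit u + (\<Sum>i\<in>{1..d}. tmul (qv v i) (Tv d v (sh i y)) u) = Tv d v y u"
    by (simp add: Tv_rec[OF assms, of y])
  also have "(\<lambda>p. \<Sum>i\<in>{1..d}. tmul (qv v i) (Tv d v (sh i x)) p) = (\<lambda>p. 1 * Tv d v x p + (- x []) * tunit p)"
    by (rule ext) (simp add: Tv_rec[OF assms, of x])
  also have "tmul \<dots> (Tv d v y) u = Tv d v x u * 0 + tmul (Tv d v x) (Tv d v y) u - x [] * Tv d v y u"
    by (subst tmul_lin_left) simp
  finally show ?case by simp
qed

lemma Tv_mult: "vok d v \<Longrightarrow> Tv d v (tmul x y) = tmul (Tv d v x) (Tv d v y)"
  by (rule ext) (rule Tv_mult_pt)

lemma Tv_tinv:
  assumes "vok d v" "x [] = 1"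
  shows "Tv d v (tinv x) = tinv (Tv d v x)"
proof (rule tinv_unique_left)
  show "Tv d v x [] = 1" using assms by simp
  have "tmul (Tv d v (tinv x)) (Tv d v x) = Tv d v (tmul (tinv x) x)" by (simp add: Tv_mult[OF assms(1)])
  also have "\<dots> = tunit" using tinv_left[of x] assms(2) by simp
  finally show "tmul (Tv d v (tinv x)) (Tv d v x) = tunit" .
qed

lemma Tv_trunc: "trunc M (Tv d v (trunc M x)) = trunc M (Tv d v x)"
  unfolding trunc_def[of M "Tv d v _"] Tv_B
  by (auto intro!: ext sum.cong simp: trunc_def B_def)




definition lc :: "(nat \<Rightarrow> word \<Rightarrow> real) \<Rightarrow> word \<Rightarrow> real" where
  "lc F l = (case l of [] \<Rightarrow> 0 | a # t \<Rightarrow> F a t)"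

lemma lc_Nil[simp]: "lc F [] = 0" and lc_Cons[simp]: "lc F (a # t) = F a t"
  by (simp_all add: lc_def)

lemma lc_mult: "lc F l * c = lc (\<lambda>a t. F a t * c) l"
  by (cases l) auto

lemma lc_add: "lc F l + lc G l = lc (\<lambda>a t. F a t + G a t) l"
  by (cases l) auto

lemma lc_scale: "c * lc F l = lc (\<lambda>a t. c * F a t) l"
  by (cases l) auto

lemma lc_sum: "(\<Sum>i\<in>I. lc (F i) l) = lc (\<lambda>a t. \<Sum>i\<in>I. F i a t) l"
  by (cases l) auto

lemma sum_lc_take:
  "(\<Sum>i\<le>length u. lc (\<lambda>a t. H a t (drop i u)) (take i u))
     = lc (\<lambda>a u'. \<Sum>i\<le>length u'. H a (take i u') (drop i u')) u"
  by (cases u) (simp_all add: sum.atMost_Suc_shift del: sum.atMost_Suc)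

lemma shuf_v_Nil[simp]: "shuf v [] = [v]"
  by (cases v) auto

lemma spair_rec:
  "spair x u w = (if u = [] \<and> w = [] then x [] else 0)
     + lc (\<lambda>a t. spair (sh a x) t w) u + lc (\<lambda>b t. spair (sh b x) u t) w"
  by (cases u; cases w) (auto simp: spair_def sh_def o_def)

lemma spair_Nil_left[simp]: "spair x [] w = x w"
  by (simp add: spair_def)

lemma spair_Nil_right[simp]: "spair x u [] = x u"
  by (simp add: spair_def)

lemma sl_lin: "(\<Sum>p\<leftarrow>L. a * x p + b * (y p::real)) = a * sum_list (map x L) + b * sum_list (map y L)"
  by (induction L) (auto simp: algebra_simps)
lemma sl_diff: "(\<Sum>p\<leftarrow>L. x p - (y p::real)) = sum_list (map x L) - sum_list (map y L)"
  by (induction L) (auto simp: algebra_simps)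
lemma sl_sum: "(\<Sum>p\<leftarrow>L. \<Sum>i\<in>I. f i p) = (\<Sum>i\<in>I. sum_list (map (f i) L))"
  by (induction L) (auto simp: sum.distrib)
lemma sl_zero: "(\<Sum>p\<leftarrow>L. (0::real)) = 0"
  by (induction L) auto

lemma spair_lin: "spair (\<lambda>p. a * x p + b * y p) u w = a * spair x u w + b * spair y u w"
  unfolding spair_def by (rule sl_lin)

lemma spair_diff: "spair (\<lambda>p. x p - y p) u w = spair x u w - spair y u w"
  unfolding spair_def by (rule sl_diff)

lemma spair_sum: "spair (\<lambda>p. \<Sum>i\<in>I. f i p) u w = (\<Sum>i\<in>I. spair (f i) u w)"
  unfolding spair_def by (rule sl_sum)

lemma spair_zero[simp]: "spair (\<lambda>p. 0) u w = 0"
  unfolding spair_def by (rule sl_zero)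

lemma tunit_Nil[simp]: "tunit [] = 1" by (simp add: tunit_def)

lemma sh_tunit: "sh a tunit = (\<lambda>p. 0)"
  by (simp add: sh_def tunit_def)

lemma spair_tunit: "spair tunit u w = (if u = [] \<and> w = [] then 1 else 0)"
  using spair_rec[of tunit u w] by (auto simp: sh_tunit lc_def split: list.splits)

lemma shuf_length: "z \<in> set (shuf u w) \<Longrightarrow> length z = length u + length w"
  by (induction u w arbitrary: z rule: shuf.induct) auto

lemma shuf_set: "z \<in> set (shuf u w) \<Longrightarrow> set z \<subseteq> set u \<union> set w"
  by (induction u w arbitrary: z rule: shuf.induct) fastforce+

lemma spair_local:
  assumes "\<And>z. length z = length u + length w \<Longrightarrow> x z = y z"
  shows "spair x u w = spair y u w"
  unfolding spair_def using assms shuf_length[of _ u w]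
  by (intro arg_cong[where f=sum_list] map_cong) auto

lemma spair_trunc: "length u + length w \<le> M \<Longrightarrow> spair (trunc M x) u w = spair x u w"
  by (rule spair_local) (simp add: trunc_def)

lemma spair_hcomp: "spair (hcomp (length u + length w) x) u w = spair x u w"
  by (rule spair_local) (simp add: hcomp_def)

lemma take_eq_Nil_le: "i \<le> length u \<Longrightarrow> (take i u = []) = (i = 0)"
  by auto

lemma spair_tmul:
  "spair (tmul x y) u w = (\<Sum>i\<le>length u. \<Sum>j\<le>length w.
      spair x (take i u) (take j w) * spair y (drop i u) (drop j w))"
proof (induction "length u + length w" arbitrary: u w x rule: less_induct)
  case less
  define C where "C x u w = (\<Sum>i\<le>length u. \<Sum>j\<le>length w.
      spair x (take i u) (take j w) * spair y (drop i u) (drop j w))" for x u w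
  have IHu: "lc (\<lambda>a t. spair (tmul (sh a x) y) t w) u = lc (\<lambda>a t. C (sh a x) t w) u"
    by (cases u) (auto simp: C_def intro!: less)
  have IHw: "lc (\<lambda>b t. spair (tmul (sh b x) y) u t) w = lc (\<lambda>b t. C (sh b x) u t) w"
    by (cases w) (auto simp: C_def intro!: less)
  have shm: "sh a (tmul x y) = (\<lambda>p. x [] * sh a y p + 1 * tmul (sh a x) y p)" for a
    by (rule ext) (simp add: sh_def tmul_Cons)
  have shl: "spair (sh a (tmul x y)) u' w' = x [] * spair (sh a y) u' w' + spair (tmul (sh a x) y) u' w'" for a u' w'
    unfolding shm spair_lin by simp
  have L0: "spair (tmul x y) u w = (if u = [] \<and> w = [] then x [] * y [] else 0)
      + x [] * lc (\<lambda>a t. spair (sh a y) t w) u + lc (\<lambda>a t. spair (tmul (sh a x) y) t w) u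
      + x [] * lc (\<lambda>b t. spair (sh b y) u t) w + lc (\<lambda>b t. spair (tmul (sh b x) y) u t) w"
    by (subst spair_rec) (auto simp add: shl lc_def algebra_simps split: list.splits)
  have L: "spair (tmul x y) u w = (if u = [] \<and> w = [] then x [] * y [] else 0)
      + x [] * lc (\<lambda>a t. spair (sh a y) t w) u + lc (\<lambda>a t. C (sh a x) t w) u
      + x [] * lc (\<lambda>b t. spair (sh b y) u t) w + lc (\<lambda>b t. C (sh b x) u t) w"
    using L0 IHu IHw by simp
  have "C x u w = (\<Sum>i\<le>length u. \<Sum>j\<le>length w.
      ((if take i u = [] \<and> take j w = [] then x [] else 0)
     + lc (\<lambda>a t. spair (sh a x) t (take j w)) (take i u)
     + lc (\<lambda>b t. spair (sh b x) (take i u) t) (take j w)) * spair y (drop i u) (drop j w))"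
    unfolding C_def by (subst spair_rec) simp
  also have "\<dots> = (\<Sum>i\<le>length u. \<Sum>j\<le>length w.
      (if take i u = [] \<and> take j w = [] then x [] else 0) * spair y (drop i u) (drop j w))
    + (\<Sum>i\<le>length u. \<Sum>j\<le>length w.
      lc (\<lambda>a t. spair (sh a x) t (take j w)) (take i u) * spair y (drop i u) (drop j w))
    + (\<Sum>i\<le>length u. \<Sum>j\<le>length w.
      lc (\<lambda>b t. spair (sh b x) (take i u) t) (take j w) * spair y (drop i u) (drop j w))"
    by (simp add: distrib_right sum.distrib)
  also have "(\<Sum>i\<le>length u. \<Sum>j\<le>length w.
      (if take i u = [] \<and> take j w = [] then x [] else 0) * spair y (drop i u) (drop j w))
      = x [] * spair y u w"
  proof -
    have inner: "(\<Sum>j\<le>length w. (if take i u = [] \<and> take j w = [] then x [] else 0) * spair y (drop i u) (drop j w))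
      = (if i = 0 then x [] * spair y u w else 0)" if i: "i \<le> length u" for i
    proof -
      have "(\<Sum>j\<le>length w. (if take i u = [] \<and> take j w = [] then x [] else 0) * spair y (drop i u) (drop j w))
        = (\<Sum>j\<le>length w. if j = 0 then (if i = 0 then x [] * spair y u w else 0) else 0)"
        by (intro sum.cong refl) (use i in \<open>auto simp: take_eq_Nil_le\<close>)
      then show ?thesis by simp
    qed
    have "(\<Sum>i\<le>length u. \<Sum>j\<le>length w.
      (if take i u = [] \<and> take j w = [] then x [] else 0) * spair y (drop i u) (drop j w))
      = (\<Sum>i\<le>length u. if i = 0 then x [] * spair y u w else 0)"
      by (intro sum.cong refl inner) simp
    then show ?thesis by simp
  qed
  also have "(\<Sum>i\<le>length u. \<Sum>j\<le>length w.
      lc (\<lambda>a t. spair (sh a x) t (take j w)) (take i u) * spair y (drop i u) (drop j w))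
      = lc (\<lambda>a t. C (sh a x) t w) u"
  proof -
    have "(\<Sum>i\<le>length u. \<Sum>j\<le>length w.
      lc (\<lambda>a t. spair (sh a x) t (take j w)) (take i u) * spair y (drop i u) (drop j w))
      = (\<Sum>j\<le>length w. \<Sum>i\<le>length u.
      lc (\<lambda>a t. spair (sh a x) t (take j w) * spair y (drop i u) (drop j w)) (take i u))"
      by (subst sum.swap) (simp add: lc_mult)
    also have "\<dots> = (\<Sum>j\<le>length w. lc (\<lambda>a u'. \<Sum>i\<le>length u'.
        spair (sh a x) (take i u') (take j w) * spair y (drop i u') (drop j w)) u)"
      by (intro sum.cong refl) (rule sum_lc_take[where H="\<lambda>a t d. spair (sh a x) t (take _ w) * spair y d (drop _ w)"])
    also have "\<dots> = lc (\<lambda>a t. C (sh a x) t w) u"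
      unfolding lc_sum C_def by (subst sum.swap) simp
    finally show ?thesis .
  qed
  also have "(\<Sum>i\<le>length u. \<Sum>j\<le>length w.
      lc (\<lambda>b t. spair (sh b x) (take i u) t) (take j w) * spair y (drop i u) (drop j w))
      = lc (\<lambda>b t. C (sh b x) u t) w"
  proof -
    have "(\<Sum>i\<le>length u. \<Sum>j\<le>length w.
      lc (\<lambda>b t. spair (sh b x) (take i u) t) (take j w) * spair y (drop i u) (drop j w))
      = (\<Sum>i\<le>length u. \<Sum>j\<le>length w.
      lc (\<lambda>b t. spair (sh b x) (take i u) t * spair y (drop i u) (drop j w)) (take j w))"
      by (simp add: lc_mult)
    also have "\<dots> = (\<Sum>i\<le>length u. lc (\<lambda>b w'. \<Sum>j\<le>length w'.
        spair (sh b x) (take i u) (take j w') * spair y (drop i u) (drop j w')) w)"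
      by (intro sum.cong refl) (rule sum_lc_take[where H="\<lambda>b t d. spair (sh b x) (take _ u) t * spair y (drop _ u) d"])
    also have "\<dots> = lc (\<lambda>b t. C (sh b x) u t) w"
      unfolding lc_sum C_def by simp
    finally show ?thesis .
  qed
  finally have R: "C x u w = x [] * spair y u w + lc (\<lambda>a t. C (sh a x) t w) u + lc (\<lambda>b t. C (sh b x) u t) w" .
  have "spair y u w = (if u = [] \<and> w = [] then y [] else 0)
     + lc (\<lambda>a t. spair (sh a y) t w) u + lc (\<lambda>b t. spair (sh b y) u t) w"
    by (rule spair_rec)
  then show ?case using L R unfolding C_def[symmetric] by (simp add: algebra_simps)
qed




definition prim :: "tseries \<Rightarrow> bool" where
  "prim x \<longleftrightarrow> x [] = 0 \<and> (\<forall>u w. u \<noteq> [] \<longrightarrow> w \<noteq> [] \<longrightarrow> spair x u w = 0)"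

lemma prim_spair: "prim q \<Longrightarrow> spair q a b = (if b = [] then q a else 0) + (if a = [] then q b else 0)"
  unfolding prim_def by (cases "a = []"; cases "b = []") auto

lemma prim_lin: "prim x \<Longrightarrow> prim y \<Longrightarrow> prim (\<lambda>p. a * x p + b * y p)"
  unfolding prim_def by (simp add: spair_lin)

lemma prim_zero: "prim (\<lambda>p. 0)"
  unfolding prim_def by simp

lemma drop_eq_Nil_le: "k \<le> length u \<Longrightarrow> (drop k u = []) = (k = length u)"
  by auto

lemma spair_tmul_prim:
  assumes "prim q"
  shows "spair (tmul q F) u w = (\<Sum>i\<le>length u. q (take i u) * spair F (drop i u) w)
                              + (\<Sum>j\<le>length w. q (take j w) * spair F u (drop j w))"
proof -
  have "spair (tmul q F) u w = (\<Sum>i\<le>length u. \<Sum>j\<le>length w.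
      ((if j = 0 then q (take i u) else 0) + (if i = 0 then q (take j w) else 0)) * spair F (drop i u) (drop j w))"
    unfolding spair_tmul prim_spair[OF assms]
    by (intro sum.cong refl) (auto simp: take_eq_Nil_le)
  also have "\<dots> = (\<Sum>i\<le>length u. \<Sum>j\<le>length w. (if j = 0 then q (take i u) * spair F (drop i u) (drop j w) else 0)
      + (if i = 0 then q (take j w) * spair F (drop i u) (drop j w) else 0))"
    by (intro sum.cong refl) simp
  also have "\<dots> = (\<Sum>i\<le>length u. \<Sum>j\<le>length w. (if j = 0 then q (take i u) * spair F (drop i u) (drop j w) else 0))
      + (\<Sum>i\<le>length u. \<Sum>j\<le>length w. (if i = 0 then q (take j w) * spair F (drop i u) (drop j w) else 0))"
    by (simp only: sum.distrib)
  also have "(\<Sum>i\<le>length u. \<Sum>j\<le>length w. (if j = 0 then q (take i u) * spair F (drop i u) (drop j w) else 0))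
      = (\<Sum>i\<le>length u. q (take i u) * spair F (drop i u) w)"
    by simp
  also have "(\<Sum>i\<le>length u. \<Sum>j\<le>length w. (if i = 0 then q (take j w) * spair F (drop i u) (drop j w) else 0))
      = (\<Sum>j\<le>length w. q (take j w) * spair F u (drop j w))"
    by (subst sum.swap) simp
  finally show ?thesis by simp
qed

lemma sum_single_last:
  "(\<Sum>k\<le>length u. f k * (if drop k u = [] then c else 0)) = f (length u) * (c::real)"
proof -
  have "(\<Sum>k\<le>length u. f k * (if drop k u = [] then c else 0)) = (\<Sum>k\<le>length u. if k = length u then f k * c else 0)"
    by (intro sum.cong refl) (auto simp: drop_eq_Nil_le)
  then show ?thesis by simp
qed

lemma prim_bracket:
  assumes "prim x" "prim y"
  shows "prim (\<lambda>w. tmul x y w - tmul y x w)"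
proof -
  have sym: "spair (tmul x y) u w = x u * y w + x w * y u"
    if "u \<noteq> []" "w \<noteq> []" "prim x" "prim y" for x y u w
  proof -
    have "spair (tmul x y) u w = (\<Sum>k\<le>length u. x (take k u) * (if drop k u = [] then y w else 0))
        + (\<Sum>k\<le>length w. x (take k w) * (if drop k w = [] then y u else 0))"
      unfolding spair_tmul_prim[OF that(3)] prim_spair[OF that(4)] using that(1,2) by simp
    then show ?thesis by (simp only: sum_single_last) simp
  qed
  show ?thesis
    unfolding prim_def
  proof (intro conjI allI impI)
    show "tmul x y [] - tmul y x [] = 0" by simp
    fix u w :: word assume "u \<noteq> []" "w \<noteq> []"
    then show "spair (\<lambda>w. tmul x y w - tmul y x w) u w = 0"
      using sym[of u w x y] sym[of u w y x] assms by (simp add: spair_diff)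
  qed
qed

lemma prim_letter: "prim (letter i)"
  unfolding prim_def
proof (intro conjI allI impI)
  show "letter i [] = 0" by (simp add: letter_def)
  fix u w :: word assume "u \<noteq> []" "w \<noteq> []"
  then have "spair (letter i) u w = spair (\<lambda>p. 0) u w"
    by (intro spair_local) (cases u; cases w; auto simp: letter_def)
  then show "spair (letter i) u w = 0" by simp
qed

lemma lie_poly_prim: "x \<in> lie_poly d \<Longrightarrow> prim x"
proof (induction rule: lie_poly.induct)
  case (lp_gen i) show ?case by (rule prim_letter)
next
  case lp_zero then show ?case by (simp add: tzero_def prim_zero)
next
  case (lp_add x y) then show ?case using prim_lin[of x y 1 1] by simp
next
  case (lp_scale x c) then show ?case using prim_lin[of x "\<lambda>p. 0" c 0] by (simp add: prim_zero)
next
  case (lp_bracket x y) then show ?case using prim_bracket by blast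
qed

lemma lie_series_prim:
  assumes "lie_series d x"
  shows "prim x"
  unfolding prim_def
proof (intro conjI allI impI)
  have "hcomp 0 x \<in> lie_poly d" using assms by (simp add: lie_series_def)
  then have "hcomp 0 x [] = 0" using lie_poly_prim prim_def by blast
  then show "x [] = 0" by (simp add: hcomp_def)
  fix u w :: word assume uw: "u \<noteq> []" "w \<noteq> []"
  have "hcomp (length u + length w) x \<in> lie_poly d" using assms by (simp add: lie_series_def)
  then have "spair (hcomp (length u + length w) x) u w = 0" using uw lie_poly_prim prim_def by blast
  then show "spair x u w = 0" by (simp add: spair_hcomp)
qed

definition vprim :: "nat \<Rightarrow> (nat \<Rightarrow> tseries) \<Rightarrow> bool" where
  "vprim d v \<longleftrightarrow> vok d v \<and> (\<forall>i\<in>{1..d}. prim (qv v i))"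

lemma lie_series_vprim:
  assumes "\<forall>i\<in>{1..d}. lie_series d (v i)"
  shows "vprim d v"
  unfolding vprim_def vok_def
proof (intro conjI ballI)
  fix i assume i: "i \<in> {1..d}"
  have p: "prim (v i)" using assms i lie_series_prim by blast
  show "tser d (v i)" using assms i by (simp add: lie_series_def)
  show "v i [] = 0" using p by (simp add: prim_def)
  show "prim (qv v i)" unfolding qv_def using prim_lin[OF prim_letter[of i] p, of 1 1] by simp
qed

definition Rf :: "nat \<Rightarrow> (nat \<Rightarrow> tseries) \<Rightarrow> tseries \<Rightarrow> nat \<Rightarrow> nat \<Rightarrow> word \<Rightarrow> word \<Rightarrow> real" where
  "Rf d v x n m u w = (\<Sum>a\<in>B d n. \<Sum>b\<in>B d m. spair x a b * Pw v a u * Pw v b w)"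

lemma Rf_indep:
  assumes "vok d v" "length u \<le> n" "length w \<le> m"
  shows "Rf d v x n m u w = Rf d v x (length u) (length w) u w"
proof -
  have "Rf d v x n m u w = (\<Sum>a\<in>B d n. \<Sum>b\<in>B d (length w). spair x a b * Pw v a u * Pw v b w)"
    unfolding Rf_def
    by (intro sum.cong refl sum.mono_neutral_right finite_B B_mono)
       (use assms in \<open>auto simp: B_def intro!: Pw_small\<close>)
  also have "\<dots> = Rf d v x (length u) (length w) u w"
    unfolding Rf_def
    by (intro sum.mono_neutral_right finite_B B_mono)
       (use assms in \<open>auto simp: B_def intro!: sum.neutral Pw_small\<close>)
  finally show ?thesis .
qed




lemma swap3: "(\<Sum>k\<in>K. f k * (\<Sum>a\<in>A. \<Sum>b\<in>Bs. g a b k)) = (\<Sum>a\<in>A. \<Sum>b\<in>Bs. \<Sum>k\<in>K. f k * (g a b k::real))"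
proof -
  have "(\<Sum>k\<in>K. f k * (\<Sum>a\<in>A. \<Sum>b\<in>Bs. g a b k)) = (\<Sum>k\<in>K. \<Sum>a\<in>A. \<Sum>b\<in>Bs. f k * g a b k)"
    by (simp add: sum_distrib_left)
  also have "\<dots> = (\<Sum>a\<in>A. \<Sum>k\<in>K. \<Sum>b\<in>Bs. f k * g a b k)" by (rule sum.swap)
  also have "\<dots> = (\<Sum>a\<in>A. \<Sum>b\<in>Bs. \<Sum>k\<in>K. f k * g a b k)" by (intro sum.cong refl sum.swap)
  finally show ?thesis .
qed

lemma tunit_mult: "(if u = [] \<and> w = [] then 1 else 0) = tunit u * tunit w"
  by (simp add: tunit_def)

lemma spair_Tv:
  assumes "vprim d v"
  shows "spair (Tv d v x) u w = Rf d v x (Suc (length u)) (Suc (length w)) u w"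
proof (induction "length u + length w" arbitrary: u w x rule: less_induct)
  case less
  have vok: "vok d v" using assms by (simp add: vprim_def)
  have pq: "prim (qv v i)" if "i \<in> {1..d}" for i using assms that by (simp add: vprim_def)
  have q0: "qv v i [] = 0" if "i \<in> {1..d}" for i using qv_Nil[OF vok that] .
  have TvE: "Tv d v x = (\<lambda>p. x [] * tunit p + 1 * (\<Sum>i\<in>{1..d}. tmul (qv v i) (Tv d v (sh i x)) p))"
    by (rule ext) (simp add: Tv_rec[OF vok])
  have S1: "spair (Tv d v x) u w = x [] * spair tunit u w
      + (\<Sum>i\<in>{1..d}. spair (tmul (qv v i) (Tv d v (sh i x))) u w)"
    by (subst TvE, subst spair_lin[of "x []" tunit 1 "\<lambda>p. \<Sum>i\<in>{1..d}. tmul (qv v i) (Tv d v (sh i x)) p"])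
       (simp add: spair_sum)
  have U: "(\<Sum>k\<le>length u. qv v i (take k u) * spair (Tv d v (sh i x)) (drop k u) w)
      = (\<Sum>a\<in>B d (length u). \<Sum>b\<in>B d (Suc (length w)). spair (sh i x) a b * Pw v (i # a) u * Pw v b w)"
    if i: "i \<in> {1..d}" for i
  proof -
    have "(\<Sum>k\<le>length u. qv v i (take k u) * spair (Tv d v (sh i x)) (drop k u) w)
        = (\<Sum>k\<le>length u. qv v i (take k u) * Rf d v (sh i x) (length u) (Suc (length w)) (drop k u) w)"
    proof (intro sum.cong refl)
      fix k assume k: "k \<in> {..length u}"
      show "qv v i (take k u) * spair (Tv d v (sh i x)) (drop k u) w
          = qv v i (take k u) * Rf d v (sh i x) (length u) (Suc (length w)) (drop k u) w"
      proof (cases "k = 0 \<or> u = []")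
        case True then show ?thesis using q0[OF i] by auto
      next
        case False
        then have lt: "length (drop k u) + length w < length u + length w" by auto
        have "spair (Tv d v (sh i x)) (drop k u) w = Rf d v (sh i x) (Suc (length (drop k u))) (Suc (length w)) (drop k u) w"
          using less(1)[OF lt] .
        also have "\<dots> = Rf d v (sh i x) (length u) (Suc (length w)) (drop k u) w"
          using Rf_indep[OF vok, of "drop k u" "Suc (length (drop k u))" w "Suc (length w)"]
                Rf_indep[OF vok, of "drop k u" "length u" w "Suc (length w)"] by simp
        finally show ?thesis by simp
      qed
    qed
    also have "\<dots> = (\<Sum>a\<in>B d (length u). \<Sum>b\<in>B d (Suc (length w)). \<Sum>k\<le>length u.
        qv v i (take k u) * (spair (sh i x) a b * Pw v a (drop k u) * Pw v b w))"
      unfolding Rf_def by (rule swap3)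
    also have "\<dots> = (\<Sum>a\<in>B d (length u). \<Sum>b\<in>B d (Suc (length w)). spair (sh i x) a b * Pw v (i # a) u * Pw v b w)"
    proof (intro sum.cong refl)
      fix a b
      have "(\<Sum>k\<le>length u. qv v i (take k u) * (spair (sh i x) a b * Pw v a (drop k u) * Pw v b w))
          = spair (sh i x) a b * (\<Sum>k\<le>length u. qv v i (take k u) * Pw v a (drop k u)) * Pw v b w"
        by (simp add: sum_distrib_left sum_distrib_right algebra_simps)
      also have "(\<Sum>k\<le>length u. qv v i (take k u) * Pw v a (drop k u)) = Pw v (i # a) u"
        by (simp add: Pw_Cons tmul_def)
      finally show "(\<Sum>k\<le>length u. qv v i (take k u) * (spair (sh i x) a b * Pw v a (drop k u) * Pw v b w))
          = spair (sh i x) a b * Pw v (i # a) u * Pw v b w" .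
    qed
    finally show ?thesis .
  qed
  have W: "(\<Sum>k\<le>length w. qv v i (take k w) * spair (Tv d v (sh i x)) u (drop k w))
      = (\<Sum>a\<in>B d (Suc (length u)). \<Sum>b\<in>B d (length w). spair (sh i x) a b * Pw v a u * Pw v (i # b) w)"
    if i: "i \<in> {1..d}" for i
  proof -
    have "(\<Sum>k\<le>length w. qv v i (take k w) * spair (Tv d v (sh i x)) u (drop k w))
        = (\<Sum>k\<le>length w. qv v i (take k w) * Rf d v (sh i x) (Suc (length u)) (length w) u (drop k w))"
    proof (intro sum.cong refl)
      fix k assume k: "k \<in> {..length w}"
      show "qv v i (take k w) * spair (Tv d v (sh i x)) u (drop k w)
          = qv v i (take k w) * Rf d v (sh i x) (Suc (length u)) (length w) u (drop k w)"
      proof (cases "k = 0 \<or> w = []")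
        case True then show ?thesis using q0[OF i] by auto
      next
        case False
        then have lt: "length u + length (drop k w) < length u + length w" by auto
        have "spair (Tv d v (sh i x)) u (drop k w) = Rf d v (sh i x) (Suc (length u)) (Suc (length (drop k w))) u (drop k w)"
          using less(1)[OF lt] .
        also have "\<dots> = Rf d v (sh i x) (Suc (length u)) (length w) u (drop k w)"
          using Rf_indep[OF vok, of u "Suc (length u)" "drop k w" "Suc (length (drop k w))"]
                Rf_indep[OF vok, of u "Suc (length u)" "drop k w" "length w"] by simp
        finally show ?thesis by simp
      qed
    qed
    also have "\<dots> = (\<Sum>a\<in>B d (Suc (length u)). \<Sum>b\<in>B d (length w). \<Sum>k\<le>length w.
        qv v i (take k w) * (spair (sh i x) a b * Pw v a u * Pw v b (drop k w)))"
      unfolding Rf_def by (rule swap3)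
    also have "\<dots> = (\<Sum>a\<in>B d (Suc (length u)). \<Sum>b\<in>B d (length w). spair (sh i x) a b * Pw v a u * Pw v (i # b) w)"
    proof (intro sum.cong refl)
      fix a b
      have "(\<Sum>k\<le>length w. qv v i (take k w) * (spair (sh i x) a b * Pw v a u * Pw v b (drop k w)))
          = spair (sh i x) a b * Pw v a u * (\<Sum>k\<le>length w. qv v i (take k w) * Pw v b (drop k w))"
        by (simp add: sum_distrib_left sum_distrib_right algebra_simps)
      also have "(\<Sum>k\<le>length w. qv v i (take k w) * Pw v b (drop k w)) = Pw v (i # b) w"
        by (simp add: Pw_Cons tmul_def)
      finally show "(\<Sum>k\<le>length w. qv v i (take k w) * (spair (sh i x) a b * Pw v a u * Pw v b (drop k w)))
          = spair (sh i x) a b * Pw v a u * Pw v (i # b) w" .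
    qed
    finally show ?thesis .
  qed
  have LHS: "spair (Tv d v x) u w = x [] * tunit u * tunit w
      + (\<Sum>i\<in>{1..d}. \<Sum>a\<in>B d (length u). \<Sum>b\<in>B d (Suc (length w)). spair (sh i x) a b * Pw v (i # a) u * Pw v b w)
      + (\<Sum>i\<in>{1..d}. \<Sum>a\<in>B d (Suc (length u)). \<Sum>b\<in>B d (length w). spair (sh i x) a b * Pw v a u * Pw v (i # b) w)"
    unfolding S1 spair_tunit tunit_mult
    by (simp add: spair_tmul_prim[OF pq] U W sum.distrib)
  define n where "n = length u"
  define m where "m = length w"
  have "Rf d v x (Suc n) (Suc m) u w = (\<Sum>a\<in>B d (Suc n). \<Sum>b\<in>B d (Suc m).
       ((if a = [] \<and> b = [] then x [] else 0) + lc (\<lambda>i t. spair (sh i x) t b) a + lc (\<lambda>i t. spair (sh i x) a t) b)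
       * Pw v a u * Pw v b w)"
    unfolding Rf_def by (subst spair_rec) simp
  also have "\<dots> = (\<Sum>a\<in>B d (Suc n). \<Sum>b\<in>B d (Suc m). (if a = [] \<and> b = [] then x [] else 0) * Pw v a u * Pw v b w)
      + (\<Sum>a\<in>B d (Suc n). \<Sum>b\<in>B d (Suc m). lc (\<lambda>i t. spair (sh i x) t b) a * Pw v a u * Pw v b w)
      + (\<Sum>a\<in>B d (Suc n). \<Sum>b\<in>B d (Suc m). lc (\<lambda>i t. spair (sh i x) a t) b * Pw v a u * Pw v b w)"
    by (simp add: distrib_right sum.distrib)
  also have "(\<Sum>a\<in>B d (Suc n). \<Sum>b\<in>B d (Suc m). (if a = [] \<and> b = [] then x [] else 0) * Pw v a u * Pw v b w)
      = x [] * tunit u * tunit w"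
    by (simp add: sum_B_Suc)
  also have "(\<Sum>a\<in>B d (Suc n). \<Sum>b\<in>B d (Suc m). lc (\<lambda>i t. spair (sh i x) t b) a * Pw v a u * Pw v b w)
      = (\<Sum>i\<in>{1..d}. \<Sum>a\<in>B d n. \<Sum>b\<in>B d (Suc m). spair (sh i x) a b * Pw v (i # a) u * Pw v b w)"
    by (subst sum_B_Suc) simp
  also have "(\<Sum>a\<in>B d (Suc n). \<Sum>b\<in>B d (Suc m). lc (\<lambda>i t. spair (sh i x) a t) b * Pw v a u * Pw v b w)
      = (\<Sum>i\<in>{1..d}. \<Sum>a\<in>B d (Suc n). \<Sum>b\<in>B d m. spair (sh i x) a b * Pw v a u * Pw v (i # b) w)"
  proof -
    have "(\<Sum>a\<in>B d (Suc n). \<Sum>b\<in>B d (Suc m). lc (\<lambda>i t. spair (sh i x) a t) b * Pw v a u * Pw v b w)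
        = (\<Sum>a\<in>B d (Suc n). \<Sum>i\<in>{1..d}. \<Sum>b\<in>B d m. spair (sh i x) a b * Pw v a u * Pw v (i # b) w)"
      by (intro sum.cong refl) (subst sum_B_Suc, simp)
    also have "\<dots> = (\<Sum>i\<in>{1..d}. \<Sum>a\<in>B d (Suc n). \<Sum>b\<in>B d m. spair (sh i x) a b * Pw v a u * Pw v (i # b) w)"
      by (rule sum.swap)
    finally show ?thesis .
  qed
  finally show ?case using LHS by (simp add: n_def m_def)
qed

lemma Rf_grouplike:
  assumes "vok d v" "\<forall>a\<in>words d. \<forall>b\<in>words d. spair x a b = x a * x b"
  shows "Rf d v x (Suc (length u)) (Suc (length w)) u w = Tv d v x u * Tv d v x w"
proof -
  have "Rf d v x (Suc (length u)) (Suc (length w)) u w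
      = (\<Sum>a\<in>B d (Suc (length u)). \<Sum>b\<in>B d (Suc (length w)). (x a * Pw v a u) * (x b * Pw v b w))"
    unfolding Rf_def using assms(2) by (intro sum.cong refl) (auto simp: B_def)
  also have "\<dots> = (\<Sum>a\<in>B d (Suc (length u)). x a * Pw v a u) * (\<Sum>b\<in>B d (Suc (length w)). x b * Pw v b w)"
    by (simp add: sum_product)
  also have "\<dots> = Tv d v x u * Tv d v x w"
    using Tv_eq[OF assms(1), of u "Suc (length u)" x] Tv_eq[OF assms(1), of w "Suc (length w)" x] by simp
  finally show ?thesis .
qed

lemma grouplike_Tv:
  assumes "vprim d v" "grouplike d x"
  shows "grouplike d (Tv d v x)"
proof -
  have vok: "vok d v" using assms by (simp add: vprim_def)
  show ?thesis
    unfolding grouplike_def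
  proof (intro conjI ballI)
    show "tser d (Tv d v x)" by (rule tser_Tv[OF vok])
    show "Tv d v x [] = 1" using assms(2) by (simp add: grouplike_def)
    fix u w assume "u \<in> words d" "w \<in> words d"
    show "spair (Tv d v x) u w = Tv d v x u * Tv d v x w"
      unfolding spair_Tv[OF assms(1)]
      by (rule Rf_grouplike[OF vok]) (use assms(2) in \<open>simp add: grouplike_def\<close>)
  qed
qed




lemma lie_poly_tser: "x \<in> lie_poly d \<Longrightarrow> tser d x"
proof (induction rule: lie_poly.induct)
  case (lp_gen i) then show ?case by (simp add: tser_letter)
next
  case lp_zero then show ?case by (simp add: tser_def tzero_def)
next
  case (lp_add x y) then show ?case by (simp add: tser_def)
next
  case (lp_scale x c) then show ?case by (simp add: tser_def)
next
  case (lp_bracket x y) then show ?case using tser_tmul by (simp add: tser_def)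
qed

lemma tmul_bounded:
  assumes "\<And>w. n < length w \<Longrightarrow> x w = 0" "\<And>w. m < length w \<Longrightarrow> y w = 0" "n + m < length w"
  shows "tmul x y w = 0"
  unfolding tmul_def
proof (intro sum.neutral ballI)
  fix i assume "i \<in> {..length w}"
  then have "n < length (take i w) \<or> m < length (drop i w)" using assms(3) by auto
  then show "x (take i w) * y (drop i w) = 0" using assms(1,2) by auto
qed

lemma lie_poly_bounded: "x \<in> lie_poly d \<Longrightarrow> \<exists>n. \<forall>w. n < length w \<longrightarrow> x w = 0"
proof (induction rule: lie_poly.induct)
  case (lp_gen i) then show ?case by (intro exI[of _ 1]) (auto simp: letter_def)
next
  case lp_zero then show ?case by (simp add: tzero_def)
next
  case (lp_add x y)
  then obtain n m where "\<forall>w. n < length w \<longrightarrow> x w = 0" "\<forall>w. m < length w \<longrightarrow> y w = 0" by blast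
  then show ?case by (intro exI[of _ "n + m"]) auto
next
  case (lp_scale x c) then show ?case by auto
next
  case (lp_bracket x y)
  then obtain n m where n: "\<forall>w. n < length w \<longrightarrow> x w = 0" and m: "\<forall>w. m < length w \<longrightarrow> y w = 0" by blast
  show ?case
  proof (intro exI[of _ "n + m"] allI impI)
    fix w :: word assume "n + m < length w"
    then show "tmul x y w - tmul y x w = 0"
      using tmul_bounded[of n x m y w] tmul_bounded[of m y n x w] n m by (simp add: add.commute)
  qed
qed

lemma lie_sum: "finite I \<Longrightarrow> (\<forall>i\<in>I. f i \<in> lie_poly d) \<Longrightarrow> (\<lambda>w. \<Sum>i\<in>I. f i w) \<in> lie_poly d"
proof (induction I rule: finite_induct)
  case empty then show ?case using lie_poly.lp_zero by (simp add: tzero_def)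
next
  case (insert i I)
  then have "(\<lambda>w. f i w + (\<Sum>i\<in>I. f i w)) \<in> lie_poly d"
    by (intro lie_poly.lp_add) auto
  then show ?case using insert by simp
qed

lemma lie_scale': "x \<in> lie_poly d \<Longrightarrow> (\<lambda>w. c * x w) \<in> lie_poly d"
  by (rule lie_poly.lp_scale)

lemma hcomp_tmul:
  "hcomp n (tmul x y) = (\<lambda>w. \<Sum>j\<le>n. tmul (hcomp j x) (hcomp (n - j) y) w)"
proof
  fix w :: word
  show "hcomp n (tmul x y) w = (\<Sum>j\<le>n. tmul (hcomp j x) (hcomp (n - j) y) w)"
  proof (cases "length w = n")
    case True
    have "(\<Sum>j\<le>n. tmul (hcomp j x) (hcomp (n - j) y) w)
        = (\<Sum>j\<le>n. \<Sum>i\<le>length w. if i = j then x (take i w) * y (drop i w) else 0)"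
      unfolding tmul_def hcomp_def using True
      by (intro sum.cong refl) (auto simp: min_def)
    also have "\<dots> = (\<Sum>i\<le>length w. \<Sum>j\<le>n. if i = j then x (take i w) * y (drop i w) else 0)"
      by (rule sum.swap)
    also have "\<dots> = tmul x y w" unfolding tmul_def using True by simp
    finally show ?thesis using True by (simp add: hcomp_def)
  next
    case False
    have "tmul (hcomp j x) (hcomp (n - j) y) w = 0" if "j \<le> n" for j
      unfolding tmul_def hcomp_def using False that by (intro sum.neutral) auto
    then show ?thesis using False by (simp add: hcomp_def)
  qed
qed

lemma hcomp_lie: "x \<in> lie_poly d \<Longrightarrow> hcomp n x \<in> lie_poly d"
proof (induction arbitrary: n rule: lie_poly.induct)
  case (lp_gen i)
  show ?case
  proof (cases "n = 1")
    case True
    then have "hcomp n (letter i) = letter i" by (auto simp: hcomp_def letter_def)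
    then show ?thesis using lp_gen lie_poly.lp_gen by simp
  next
    case False
    then have "hcomp n (letter i) = tzero" by (auto simp: hcomp_def letter_def tzero_def)
    then show ?thesis using lie_poly.lp_zero by simp
  qed
next
  case lp_zero
  have "hcomp n tzero = tzero" by (auto simp: hcomp_def tzero_def)
  then show ?case using lie_poly.lp_zero by simp
next
  case (lp_add x y)
  have "hcomp n (\<lambda>w. x w + y w) = (\<lambda>w. hcomp n x w + hcomp n y w)" by (auto simp: hcomp_def)
  then show ?case using lp_add lie_poly.lp_add by simp
next
  case (lp_scale x c)
  have "hcomp n (\<lambda>w. c * x w) = (\<lambda>w. c * hcomp n x w)" by (auto simp: hcomp_def)
  then show ?case using lp_scale lie_poly.lp_scale by simp
next
  case (lp_bracket x y)
  have "hcomp n (\<lambda>w. tmul x y w - tmul y x w) = (\<lambda>w. hcomp n (tmul x y) w - hcomp n (tmul y x) w)"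
    by (auto simp: hcomp_def)
  also have "\<dots> = (\<lambda>w. \<Sum>j\<le>n. tmul (hcomp j x) (hcomp (n - j) y) w - tmul (hcomp (n - j) y) (hcomp j x) w)"
    unfolding hcomp_tmul
  proof -
    have "(\<Sum>j\<le>n. tmul (hcomp j y) (hcomp (n - j) x) w) = (\<Sum>j\<le>n. tmul (hcomp (n - j) y) (hcomp j x) w)" for w
      by (rule sum.reindex_bij_witness[of _ "\<lambda>j. n - j" "\<lambda>j. n - j"]) auto
    then show "(\<lambda>w. (\<Sum>j\<le>n. tmul (hcomp j x) (hcomp (n - j) y) w) - (\<Sum>j\<le>n. tmul (hcomp j y) (hcomp (n - j) x) w))
      = (\<lambda>w. \<Sum>j\<le>n. tmul (hcomp j x) (hcomp (n - j) y) w - tmul (hcomp (n - j) y) (hcomp j x) w)"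
      by (simp add: sum_subtractf)
  qed
  finally show ?case
    using lp_bracket by (auto intro!: lie_sum lie_poly.lp_bracket)
qed

lemma trunc_hcomp: "trunc N x = (\<lambda>w. \<Sum>n\<le>N. hcomp n x w)"
  by (rule ext) (auto simp: trunc_def hcomp_def)

lemma trunc_lie: "x \<in> lie_poly d \<Longrightarrow> trunc N x \<in> lie_poly d"
  unfolding trunc_hcomp by (auto intro!: lie_sum hcomp_lie)

lemma lie_poly_series: "x \<in> lie_poly d \<Longrightarrow> lie_series d x"
  by (simp add: lie_series_def lie_poly_tser hcomp_lie)

lemma Tv_letter:
  assumes "vok d v" "i \<in> {1..d}"
  shows "Tv d v (letter i) = qv v i"
proof
  fix u :: word
  show "Tv d v (letter i) u = qv v i u"
  proof (cases u)
    case Nil then show ?thesis using qv_Nil[OF assms] by (simp add: letter_def)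
  next
    case (Cons c u')
    have "Tv d v (letter i) u = (\<Sum>a\<in>B d (length u). if a = [i] then Pw v a u else 0)"
      unfolding Tv_B by (intro sum.cong refl) (auto simp: letter_def)
    also have "\<dots> = Pw v [i] u" using assms Cons by (subst sum.delta[OF finite_B]) (auto simp: B_def)
    finally show ?thesis by (simp add: Pw_Cons)
  qed
qed

lemma Tv_lie:
  assumes "vok d v" "\<forall>i\<in>{1..d}. v i \<in> lie_poly d" "x \<in> lie_poly d"
  shows "Tv d v x \<in> lie_poly d"
  using assms(3)
proof (induction rule: lie_poly.induct)
  case (lp_gen i)
  then have "Tv d v (letter i) = qv v i" using Tv_letter[OF assms(1)] by simp
  moreover have "qv v i \<in> lie_poly d"
    unfolding qv_def using lp_gen assms(2) by (intro lie_poly.lp_add lie_poly.lp_gen) auto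
  ultimately show ?case by simp
next
  case lp_zero then show ?case using lie_poly.lp_zero by (simp add: tzero_def)
next
  case (lp_add x y)
  have "Tv d v (\<lambda>w. x w + y w) = (\<lambda>u. Tv d v x u + Tv d v y u)"
    using Tv_lin[of d v 1 x 1 y] by (auto intro!: ext)
  then show ?case using lp_add lie_poly.lp_add by simp
next
  case (lp_scale x c)
  have "Tv d v (\<lambda>w. c * x w) = (\<lambda>u. c * Tv d v x u)" by (auto intro!: ext simp: Tv_scale)
  then show ?case using lp_scale lie_poly.lp_scale by simp
next
  case (lp_bracket x y)
  have "Tv d v (\<lambda>w. tmul x y w - tmul y x w) = (\<lambda>u. tmul (Tv d v x) (Tv d v y) u - tmul (Tv d v y) (Tv d v x) u)"
    by (auto intro!: ext simp: Tv_diff Tv_mult[OF assms(1)])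
  then show ?case using lp_bracket lie_poly.lp_bracket by simp
qed

definition vdeg :: "nat \<Rightarrow> (nat \<Rightarrow> tseries) \<Rightarrow> nat \<Rightarrow> bool" where
  "vdeg d v K \<longleftrightarrow> 1 \<le> K \<and> (\<forall>i\<in>{1..d}. \<forall>w. K < length w \<longrightarrow> v i w = 0)"

lemma Pw_deg:
  assumes "vok d v" "vdeg d v K" "a \<in> words d" "K * length a < length u"
  shows "Pw v a u = 0"
  using assms(3,4)
proof (induction a arbitrary: u)
  case Nil then show ?case by (auto simp: tunit_def)
next
  case (Cons i a)
  show ?case unfolding Pw_Cons tmul_def
  proof (intro sum.neutral ballI)
    fix k assume k: "k \<in> {..length u}"
    show "qv v i (take k u) * Pw v a (drop k u) = 0"
    proof (cases "K < k")
      case True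
      have lt: "length (take k u) = k" using k by simp
      have "take k u \<noteq> [i]"
      proof
        assume "take k u = [i]"
        then have "length (take k u) = 1" by simp
        with lt True assms(2) show False by (simp add: vdeg_def)
      qed
      then have "letter i (take k u) = 0" by (simp add: letter_def)
      moreover have "v i (take k u) = 0" using lt True assms(2) Cons.prems(1) by (auto simp: vdeg_def)
      ultimately have "qv v i (take k u) = 0" by (simp add: qv_def)
      then show ?thesis by simp
    next
      case False
      then have "K * length a < length (drop k u)" using Cons.prems k by auto
      then show ?thesis using Cons by simp
    qed
  qed
qed

lemma Tv_deg:
  assumes "vok d v" "vdeg d v K" "\<And>w. N < length w \<Longrightarrow> x w = 0" "N * K < length u"
  shows "Tv d v x u = 0"
  unfolding Tv_B
proof (intro sum.neutral ballI)
  fix a assume a: "a \<in> B d (length u)"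
  show "x a * Pw v a u = 0"
  proof (cases "N < length a")
    case True then show ?thesis using assms(3) by simp
  next
    case False
    then have "K * length a < length u" using assms(4)
      by (metis le_less_trans mult.commute mult_le_mono2 not_less)
    then show ?thesis using Pw_deg[OF assms(1,2)] a by (simp add: B_def)
  qed
qed

lemma vdeg_exists:
  assumes "\<forall>i\<in>{1..d}. v i \<in> lie_poly d"
  shows "\<exists>K. vdeg d v K"
proof -
  have "\<forall>i\<in>{1..d}. \<exists>n. \<forall>w. n < length w \<longrightarrow> v i w = 0" using assms lie_poly_bounded by blast
  then obtain n where n: "\<forall>i\<in>{1..d}. \<forall>w. n i < length w \<longrightarrow> v i w = 0" by metis
  have "\<forall>i\<in>{1..d}. n i \<le> (\<Sum>j\<in>{1..d}. n j) + 1"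
  proof
    fix i assume "i \<in> {1..d}"
    then have "n i \<le> (\<Sum>j\<in>{1..d}. n j)" by (intro member_le_sum) auto
    then show "n i \<le> (\<Sum>j\<in>{1..d}. n j) + 1" by simp
  qed
  note bnd = this
  show ?thesis
  proof (intro exI[of _ "(\<Sum>j\<in>{1..d}. n j) + 1"])
    show "vdeg d v ((\<Sum>j\<in>{1..d}. n j) + 1)"
      unfolding vdeg_def
    proof (intro conjI ballI allI impI)
      show "1 \<le> (\<Sum>j\<in>{1..d}. n j) + 1" by simp
      fix i w assume i: "i \<in> {1..d}" and lw: "(\<Sum>j\<in>{1..d}. n j) + 1 < length (w::word)"
      then have "n i < length w" using bnd i by force
      then show "v i w = 0" using n i by blast
    qed
  qed
qed




lemma smooth_deriv:
  assumes "smooth_on S g"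
  shows "\<exists>g'. \<forall>t\<in>S. (g has_real_derivative g' t) (at t within S)"
  using assms unfolding smooth_on_def by metis

lemma smooth_lin:
  assumes "smooth_on S f" "smooth_on S g"
  shows "smooth_on S (\<lambda>t. a * f t + b * g t)"
proof -
  obtain F where F: "F 0 = f" "\<forall>k. \<forall>t\<in>S. (F k has_real_derivative F (Suc k) t) (at t within S)"
    using assms(1) unfolding smooth_on_def by blast
  obtain G where G: "G 0 = g" "\<forall>k. \<forall>t\<in>S. (G k has_real_derivative G (Suc k) t) (at t within S)"
    using assms(2) unfolding smooth_on_def by blast
  show ?thesis unfolding smooth_on_def
    by (rule exI[of _ "\<lambda>k t. a * F k t + b * G k t"])
       (use F G in \<open>auto intro!: derivative_eq_intros\<close>)
qed

lemma smooth_const: "smooth_on S (\<lambda>t. c)"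
  unfolding smooth_on_def
  by (rule exI[of _ "\<lambda>k t. if k = 0 then c else 0"]) (auto intro!: derivative_eq_intros)

lemma smooth_cmult: "smooth_on S f \<Longrightarrow> smooth_on S (\<lambda>t. c * f t)"
  using smooth_lin[of S f "\<lambda>t. 0" c 0] smooth_const[of S 0] by simp

lemma smooth_sum: "finite I \<Longrightarrow> (\<And>i. i \<in> I \<Longrightarrow> smooth_on S (f i)) \<Longrightarrow> smooth_on S (\<lambda>t. \<Sum>i\<in>I. f i t)"
proof (induction I rule: finite_induct)
  case empty then show ?case using smooth_const[of S 0] by simp
next
  case (insert i I)
  then show ?case using smooth_lin[of S "f i" "\<lambda>t. \<Sum>i\<in>I. f i t" 1 1] by simp
qed

lemma smooth_transfer:
  assumes "smooth_on S g" "\<And>t. t \<in> S \<Longrightarrow> g t = h t"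
  shows "smooth_on S h"
proof -
  obtain F where F: "F 0 = g" "\<forall>k. \<forall>t\<in>S. (F k has_real_derivative F (Suc k) t) (at t within S)"
    using assms(1) unfolding smooth_on_def by blast
  define H where "H k = (if k = 0 then h else F k)" for k
  show ?thesis unfolding smooth_on_def
  proof (intro exI[of _ H] conjI allI ballI)
    show "H 0 = h" by (simp add: H_def)
    fix k t assume t: "t \<in> S"
    show "(H k has_real_derivative H (Suc k) t) (at t within S)"
    proof (cases "k = 0")
      case True
      have "(F 0 has_real_derivative F (Suc 0) t) (at t within S)" using F t by blast
      then have "(h has_real_derivative F (Suc 0) t) (at t within S)"
        by (rule has_field_derivative_transform_within[OF _ zero_less_one t]) (use assms(2) F(1) in auto)
      then show ?thesis using True by (simp add: H_def)
    next
      case False then show ?thesis using F t by (simp add: H_def)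
    qed
  qed
qed

lemma deriv_unique_Icc:
  fixes T :: real
  assumes "0 < T" "t \<in> {0..T}"
    "(f has_real_derivative D1) (at t within {0..T})" "(f has_real_derivative D2) (at t within {0..T})"
  shows "D1 = D2"
proof (rule has_field_derivative_unique[OF assms(3,4)])
  show "at t within {0..T} \<noteq> bot"
    using assms(1,2) trivial_limit_within[of t "{0..T}"] islimpt_Icc[of 0 T t] by auto
qed

lemma the_deriv_Icc:
  fixes T :: real
  assumes "0 < T" "t \<in> {0..T}" "(f has_real_derivative D) (at t within {0..T})"
  shows "(THE D. (f has_real_derivative D) (at t within {0..T})) = D"
  using assms deriv_unique_Icc by blast

lemma ode_unique_gen:
  fixes T :: real
  assumes T: "0 < T"
    and init: "\<And>w. length w \<le> M \<Longrightarrow> Z1 0 w = Z2 0 w"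
    and A0: "\<And>t. t \<in> {0..T} \<Longrightarrow> A t [] = 0"
    and d1: "\<And>t w. t \<in> {0..T} \<Longrightarrow> length w \<le> M \<Longrightarrow>
               ((\<lambda>s. Z1 s w) has_real_derivative tmul (Z1 t) (A t) w) (at t within {0..T})"
    and d2: "\<And>t w. t \<in> {0..T} \<Longrightarrow> length w \<le> M \<Longrightarrow>
               ((\<lambda>s. Z2 s w) has_real_derivative tmul (Z2 t) (A t) w) (at t within {0..T})"
  shows "\<And>t w. t \<in> {0..T} \<Longrightarrow> length w \<le> M \<Longrightarrow> Z1 t w = Z2 t w"
proof -
  have "\<forall>t\<in>{0..T}. Z1 t w = Z2 t w" if "length w \<le> M" for w
    using that
  proof (induction "length w" arbitrary: w rule: less_induct)
    case less
    have dz: "((\<lambda>s. Z1 s w - Z2 s w) has_real_derivative 0) (at t within {0..T})" if t: "t \<in> {0..T}" for t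
    proof -
      have "((\<lambda>s. Z1 s w - Z2 s w) has_real_derivative tmul (Z1 t) (A t) w - tmul (Z2 t) (A t) w) (at t within {0..T})"
        using d1[OF t less.prems] d2[OF t less.prems] by (rule DERIV_diff)
      moreover have "tmul (Z1 t) (A t) w - tmul (Z2 t) (A t) w = 0"
      proof -
        have "tmul (Z1 t) (A t) w - tmul (Z2 t) (A t) w = tmul (\<lambda>p. Z1 t p - Z2 t p) (A t) w"
          by (simp add: tmul_diff_left)
        also have "\<dots> = 0" unfolding tmul_def
        proof (intro sum.neutral ballI)
          fix i assume i: "i \<in> {..length w}"
          show "(Z1 t (take i w) - Z2 t (take i w)) * A t (drop i w) = 0"
          proof (cases "i < length w")
            case True
            then have "length (take i w) < length w" by simp
            then have "Z1 t (take i w) = Z2 t (take i w)" using less.hyps[of "take i w"] less.prems t by auto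
            then show ?thesis by simp
          next
            case False
            then have "drop i w = []" by simp
            then show ?thesis using A0[OF t] by simp
          qed
        qed
        finally show ?thesis .
      qed
      ultimately show ?thesis by simp
    qed
    obtain c where c: "\<forall>t\<in>{0..T}. Z1 t w - Z2 t w = c"
      using has_field_derivative_zero_constant[of "{0..T}" "\<lambda>s. Z1 s w - Z2 s w"] dz by auto
    have "c = 0" using c init[OF less.prems] T by force
    then show ?case using c by auto
  qed
  then show "\<And>t w. t \<in> {0..T} \<Longrightarrow> length w \<le> M \<Longrightarrow> Z1 t w = Z2 t w" by blast
qed

lemma deriv_Tv:
  assumes "\<And>w. ((\<lambda>s. X s w) has_real_derivative Xd w) (at t within S)"
  shows "((\<lambda>s. Tv d v (X s) u) has_real_derivative Tv d v Xd u) (at t within S)"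
  unfolding Tv_B by (intro DERIV_sum, rule DERIV_cmult_right, rule assms)

lemma deriv_tmul_left_const:
  assumes "\<And>w. ((\<lambda>s. X s w) has_real_derivative Xd w) (at t within S)"
  shows "((\<lambda>s. tmul c (X s) u) has_real_derivative tmul c Xd u) (at t within S)"
  unfolding tmul_def by (intro DERIV_sum, rule DERIV_cmult, rule assms)

lemma deriv_tmul_right_const:
  assumes "\<And>w. ((\<lambda>s. X s w) has_real_derivative Xd w) (at t within S)"
  shows "((\<lambda>s. tmul (X s) c u) has_real_derivative tmul Xd c u) (at t within S)"
  unfolding tmul_def by (intro DERIV_sum, rule DERIV_cmult_right, rule assms)

lemma smooth_Tv:
  assumes "\<And>w. smooth_on S (\<lambda>t. X t w)"
  shows "smooth_on S (\<lambda>t. Tv d v (X t) u)"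
proof -
  have "smooth_on S (\<lambda>t. X t a * c)" for a c
    using smooth_cmult[OF assms[of a], of c] by (simp add: mult.commute)
  then show ?thesis unfolding Tv_B by (intro smooth_sum) auto
qed

lemma smooth_tmul_left_const:
  assumes "\<And>w. smooth_on S (\<lambda>t. X t w)"
  shows "smooth_on S (\<lambda>t. tmul c (X t) u)"
  unfolding tmul_def by (intro smooth_sum smooth_cmult assms) simp

lemma smooth_trunc:
  assumes "\<And>w. smooth_on S (\<lambda>t. X t w)"
  shows "smooth_on S (\<lambda>t. trunc M (X t) u)"
  unfolding trunc_def using assms smooth_const[of S 0] by (cases "length u \<le> M") simp_all




lemma unit_coeff:
  assumes "tser d x" "x \<noteq> tzero" "\<forall>w\<in>words d. x w = x [] * x w"
  shows "x [] = 1"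
proof (rule ccontr)
  assume ne: "x [] \<noteq> 1"
  have "x w = 0" for w
  proof (cases "w \<in> words d")
    case True
    then have h: "x w = x [] * x w" using assms(3) by blast
    have "(1 - x []) * x w = x w - x [] * x w" by (simp add: left_diff_distrib)
    also have "\<dots> = 0" by (subst h[symmetric]) simp
    finally have "(1 - x []) * x w = 0" .
    then show ?thesis using ne by simp
  next
    case False then show ?thesis using assms(1) by (simp add: tser_def)
  qed
  then have "x = tzero" by (auto simp: tzero_def)
  then show False using assms(2) by simp
qed

lemma unit_coeffN:
  assumes "inTN d N x" "x \<noteq> tzero" "\<forall>w\<in>words d. length w \<le> N \<longrightarrow> x w = x [] * x w"
  shows "x [] = 1"
proof (rule ccontr)
  assume ne: "x [] \<noteq> 1"
  have "x w = 0" for w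
  proof (cases "w \<in> words d \<and> length w \<le> N")
    case True
    then have h: "x w = x [] * x w" using assms(3) by blast
    have "(1 - x []) * x w = x w - x [] * x w" by (simp add: left_diff_distrib)
    also have "\<dots> = 0" by (subst h[symmetric]) simp
    finally have "(1 - x []) * x w = 0" .
    then show ?thesis using ne by simp
  next
    case False then show ?thesis using assms(1) by (auto simp: inTN_def tser_def)
  qed
  then have "x = tzero" by (auto simp: tzero_def)
  then show False using assms(2) by simp
qed

lemma grouplike_of:
  assumes "tser d x" "x \<noteq> tzero" "\<forall>v\<in>words d. \<forall>w\<in>words d. spair x v w = x v * x w"
  shows "grouplike d x"
proof -
  have "x [] = 1"
    by (rule unit_coeff[OF assms(1,2)]) (use assms(3) in \<open>metis spair_Nil_left words_Nil\<close>)
  then show ?thesis using assms by (simp add: grouplike_def)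
qed

lemma grouplike_nz: "grouplike d x \<Longrightarrow> x \<noteq> tzero"
  by (auto simp: grouplike_def tzero_def)

lemma smooth_family_deriv:
  assumes "\<forall>w. smooth_on S (\<lambda>t. X t w)"
  shows "\<exists>Xd. \<forall>t\<in>S. \<forall>w. ((\<lambda>s. X s w) has_real_derivative Xd t w) (at t within S)"
proof -
  have "\<forall>w. \<exists>g'. \<forall>t\<in>S. ((\<lambda>s. X s w) has_real_derivative g' t) (at t within S)"
    using assms smooth_deriv by blast
  then obtain G where "\<forall>w. \<forall>t\<in>S. ((\<lambda>s. X s w) has_real_derivative G w t) (at t within S)" by metis
  then show ?thesis by (intro exI[of _ "\<lambda>t w. G w t"]) auto
qed

lemma deriv_const_one:
  fixes T :: real
  assumes "0 < T" "t \<in> {0..T}" "\<forall>s\<in>{0..T}. f s = c"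
    "(f has_real_derivative D) (at t within {0..T})"
  shows "D = 0"
proof -
  have "((\<lambda>s. c) has_real_derivative 0) (at t within {0..T})" by simp
  then have "(f has_real_derivative 0) (at t within {0..T})"
    by (rule has_field_derivative_transform_within[OF _ zero_less_one assms(2)]) (use assms(3) in auto)
  then show ?thesis using deriv_unique_Icc[OF assms(1,2) assms(4)] by simp
qed

lemma sgrp_grouplike: "sgrp d T X \<Longrightarrow> t \<in> {0..T} \<Longrightarrow> grouplike d (X t)"
  unfolding sgrp_def by (intro grouplike_of) auto

lemma sgrp_core:
  assumes T: "0 < T" and vp: "vprim d v" and X: "sgrp d T X"
  shows "ode_sol d T (\<lambda>t. Tv d v (ddiag T (path_model X) t)) (Tv d v (X 0)) (\<lambda>t. Tv d v (X t))"
    and "\<And>Z. ode_sol d T (\<lambda>t. Tv d v (ddiag T (path_model X) t)) (Tv d v (X 0)) Z \<Longrightarrow>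
           \<forall>t\<in>{0..T}. Z t = Tv d v (X t)"
proof -
  have vok: "vok d v" using vp by (simp add: vprim_def)
  have g: "grouplike d (X t)" if "t \<in> {0..T}" for t using sgrp_grouplike[OF X that] .
  have X1: "X t [] = 1" if "t \<in> {0..T}" for t using g[OF that] by (simp add: grouplike_def)
  obtain Xd where Xd: "\<forall>t\<in>{0..T}. \<forall>w. ((\<lambda>s. X s w) has_real_derivative Xd t w) (at t within {0..T})"
    using smooth_family_deriv[of "{0..T}" X] X by (auto simp: sgrp_def)
  define A where "A t = Tv d v (ddiag T (path_model X) t)" for t
  have dd: "ddiag T (path_model X) t = tmul (tinv (X t)) (Xd t)" if t: "t \<in> {0..T}" for t
  proof
    fix w
    have "((\<lambda>s. path_model X t s w) has_real_derivative tmul (tinv (X t)) (Xd t) w) (at t within {0..T})"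
      unfolding path_model_def by (rule deriv_tmul_left_const) (use Xd t in blast)
    then show "ddiag T (path_model X) t w = tmul (tinv (X t)) (Xd t) w"
      unfolding ddiag_def by (rule the_deriv_Icc[OF T t])
  qed
  have Xd0: "Xd t [] = 0" if t: "t \<in> {0..T}" for t
    using deriv_const_one[OF T t, of "\<lambda>s. X s []" 1] X1 Xd t by blast
  have A0: "A t [] = 0" if t: "t \<in> {0..T}" for t
    using Xd0[OF t] by (simp add: A_def dd[OF t])
  have key: "Tv d v (Xd t) = tmul (Tv d v (X t)) (A t)" if t: "t \<in> {0..T}" for t
  proof -
    have "tmul (Tv d v (X t)) (A t) = Tv d v (tmul (X t) (tmul (tinv (X t)) (Xd t)))"
      by (simp add: A_def dd[OF t] Tv_mult[OF vok])
    also have "tmul (X t) (tmul (tinv (X t)) (Xd t)) = tmul (tmul (X t) (tinv (X t))) (Xd t)"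
      by (simp add: tmul_assoc_fun)
    also have "\<dots> = Xd t" using tinv_right[of "X t"] X1[OF t] by simp
    finally show ?thesis by simp
  qed
  have dZ: "((\<lambda>s. Tv d v (X s) w) has_real_derivative tmul (Tv d v (X t)) (A t) w) (at t within {0..T})"
    if t: "t \<in> {0..T}" for t w
    unfolding key[OF t, symmetric] by (rule deriv_Tv) (use Xd t in blast)
  show sol: "ode_sol d T (\<lambda>t. Tv d v (ddiag T (path_model X) t)) (Tv d v (X 0)) (\<lambda>t. Tv d v (X t))"
    unfolding ode_sol_def A_def[symmetric] using dZ tser_Tv[OF vok] by auto
  fix Z assume Z: "ode_sol d T (\<lambda>t. Tv d v (ddiag T (path_model X) t)) (Tv d v (X 0)) Z"
  have "Z t w = Tv d v (X t) w" if t: "t \<in> {0..T}" for t w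
  proof (rule ode_unique_gen[of T "length w" Z "\<lambda>t. Tv d v (X t)" A, OF T _ A0 _ dZ t le_refl])
    show "Z 0 w' = Tv d v (X 0) w'" for w' using Z by (simp add: ode_sol_def)
    show "((\<lambda>s. Z s w') has_real_derivative tmul (Z t') (A t') w') (at t' within {0..T})"
      if "t' \<in> {0..T}" for t' w' using Z that by (simp add: ode_sol_def A_def)
  qed auto
  then show "\<forall>t\<in>{0..T}. Z t = Tv d v (X t)" by auto
qed

lemma sgrm_cong:
  assumes "sgrm d T X" "\<And>s t. s \<in> {0..T} \<Longrightarrow> t \<in> {0..T} \<Longrightarrow> Y s t = X s t"
  shows "sgrm d T Y"
  unfolding sgrm_def
proof (intro conjI ballI allI)
  fix s t assume s: "s \<in> {0..T}" and t: "t \<in> {0..T}"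
  show "tser d (Y s t)" "Y s t \<noteq> tzero"
    using assms s t by (auto simp: sgrm_def)
  show "spair (Y s t) v w = Y s t v * Y s t w" if "v \<in> words d" "w \<in> words d" for v w
    using assms s t that by (auto simp: sgrm_def)
  fix u assume u: "u \<in> {0..T}"
  show "tmul (Y s t) (Y t u) = Y s u" using assms s t u by (auto simp: sgrm_def)
next
  fix s w assume s: "s \<in> {0..T}"
  show "smooth_on {0..T} (\<lambda>t. Y s t w)"
    by (rule smooth_transfer[of _ "\<lambda>t. X s t w"]) (use assms s in \<open>auto simp: sgrm_def\<close>)
qed

lemma sgrm_grouplike: "sgrm d T X \<Longrightarrow> s \<in> {0..T} \<Longrightarrow> t \<in> {0..T} \<Longrightarrow> grouplike d (X s t)"
  unfolding sgrm_def by (intro grouplike_of) auto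

lemma sgrm_Tv:
  assumes vp: "vprim d v" and X: "sgrm d T X"
  shows "sgrm d T (\<lambda>s t. Tv d v (X s t))"
proof -
  have vok: "vok d v" using vp by (simp add: vprim_def)
  have g: "grouplike d (Tv d v (X s t))" if "s \<in> {0..T}" "t \<in> {0..T}" for s t
    using grouplike_Tv[OF vp sgrm_grouplike[OF X that]] .
  show ?thesis
    unfolding sgrm_def
  proof (intro conjI ballI allI)
    fix s t assume s: "s \<in> {0..T}" and t: "t \<in> {0..T}"
    show "tser d (Tv d v (X s t))" by (rule tser_Tv[OF vok])
    show "Tv d v (X s t) \<noteq> tzero" using grouplike_nz[OF g[OF s t]] .
    show "spair (Tv d v (X s t)) v' w = Tv d v (X s t) v' * Tv d v (X s t) w"
      if "v' \<in> words d" "w \<in> words d" for v' w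
      using g[OF s t] that by (simp add: grouplike_def)
    fix u assume u: "u \<in> {0..T}"
    show "tmul (Tv d v (X s t)) (Tv d v (X t u)) = Tv d v (X s u)"
      using X s t u by (simp add: Tv_mult[OF vok, symmetric] sgrm_def)
  next
    fix s w assume s: "s \<in> {0..T}"
    show "smooth_on {0..T} (\<lambda>t. Tv d v (X s t) w)"
      by (rule smooth_Tv) (use X s in \<open>auto simp: sgrm_def\<close>)
  qed
qed

lemma part_i:
  assumes T: "0 < T" and vp: "vprim d v"
  shows "(\<forall>X. sgrp d T X \<longrightarrow>
         (\<exists>Z. ode_sol d T (\<lambda>t. Tv d v (ddiag T (path_model X) t)) (Tv d v (X 0)) Z) \<and>
         (\<forall>Z. ode_sol d T (\<lambda>t. Tv d v (ddiag T (path_model X) t)) (Tv d v (X 0)) Z \<longrightarrow>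
            (\<forall>t\<in>{0..T}. grouplike d (Z t) \<and> Z t = Tv d v (X t)) \<and> sgrp d T Z \<and>
            (\<forall>s\<in>{0..T}. \<forall>t\<in>{0..T}. path_model Z s t = Tv d v (path_model X s t)))) \<and>
      (\<forall>X. sgrm d T X \<longrightarrow>
         (\<exists>Z. ode_sol d T (\<lambda>t. Tv d v (ddiag T (path_model (X 0)) t)) (Tv d v (X 0 0)) Z) \<and>
         (\<forall>Z. ode_sol d T (\<lambda>t. Tv d v (ddiag T (path_model (X 0)) t)) (Tv d v (X 0 0)) Z \<longrightarrow>
            sgrm d T (path_model Z) \<and>
            (\<forall>s\<in>{0..T}. \<forall>t\<in>{0..T}. path_model Z s t = Tv d v (X s t))))"
proof -
  have vok: "vok d v" using vp by (simp add: vprim_def)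
  have A: "(\<exists>Z. ode_sol d T (\<lambda>t. Tv d v (ddiag T (path_model X) t)) (Tv d v (X 0)) Z) \<and>
         (\<forall>Z. ode_sol d T (\<lambda>t. Tv d v (ddiag T (path_model X) t)) (Tv d v (X 0)) Z \<longrightarrow>
            (\<forall>t\<in>{0..T}. grouplike d (Z t) \<and> Z t = Tv d v (X t)) \<and> sgrp d T Z \<and>
            (\<forall>s\<in>{0..T}. \<forall>t\<in>{0..T}. path_model Z s t = Tv d v (path_model X s t)))"
    if X: "sgrp d T X" for X
  proof (intro conjI allI impI)
    show "\<exists>Z. ode_sol d T (\<lambda>t. Tv d v (ddiag T (path_model X) t)) (Tv d v (X 0)) Z"
      using sgrp_core(1)[OF T vp X] by blast
    fix Z assume Z: "ode_sol d T (\<lambda>t. Tv d v (ddiag T (path_model X) t)) (Tv d v (X 0)) Z"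
    have ZX: "\<forall>t\<in>{0..T}. Z t = Tv d v (X t)" using sgrp_core(2)[OF T vp X Z] .
    have g: "grouplike d (Z t)" if "t \<in> {0..T}" for t
      using ZX that grouplike_Tv[OF vp sgrp_grouplike[OF X that]] by simp
    show "\<forall>t\<in>{0..T}. grouplike d (Z t) \<and> Z t = Tv d v (X t)" using g ZX by blast
    show "sgrp d T Z"
      unfolding sgrp_def
    proof (intro conjI ballI allI)
      fix t assume t: "t \<in> {0..T}"
      show "tser d (Z t)" "Z t \<noteq> tzero" using g[OF t] grouplike_nz[of d "Z t"] by (auto simp: grouplike_def)
      show "spair (Z t) v' w = Z t v' * Z t w" if "v' \<in> words d" "w \<in> words d" for v' w
        using g[OF t] that by (simp add: grouplike_def)
    next
      fix w
      show "smooth_on {0..T} (\<lambda>t. Z t w)"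
        by (rule smooth_transfer[of _ "\<lambda>t. Tv d v (X t) w"], rule smooth_Tv)
           (use X ZX in \<open>auto simp: sgrp_def\<close>)
    qed
    show "\<forall>s\<in>{0..T}. \<forall>t\<in>{0..T}. path_model Z s t = Tv d v (path_model X s t)"
    proof (intro ballI)
      fix s t assume s: "s \<in> {0..T}" and t: "t \<in> {0..T}"
      have X1: "X s [] = 1" using sgrp_grouplike[OF X s] by (simp add: grouplike_def)
      have "path_model Z s t = tmul (tinv (Tv d v (X s))) (Tv d v (X t))"
        using ZX s t by (simp add: path_model_def)
      also have "tinv (Tv d v (X s)) = Tv d v (tinv (X s))"
        using Tv_tinv[of d v "X s", OF vok X1] by simp
      also have "tmul (Tv d v (tinv (X s))) (Tv d v (X t)) = Tv d v (path_model X s t)"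
        by (simp add: path_model_def Tv_mult[OF vok])
      finally show "path_model Z s t = Tv d v (path_model X s t)" .
    qed
  qed
  have B: "(\<exists>Z. ode_sol d T (\<lambda>t. Tv d v (ddiag T (path_model (X 0)) t)) (Tv d v (X 0 0)) Z) \<and>
         (\<forall>Z. ode_sol d T (\<lambda>t. Tv d v (ddiag T (path_model (X 0)) t)) (Tv d v (X 0 0)) Z \<longrightarrow>
            sgrm d T (path_model Z) \<and>
            (\<forall>s\<in>{0..T}. \<forall>t\<in>{0..T}. path_model Z s t = Tv d v (X s t)))"
    if X: "sgrm d T X" for X
  proof -
    have z: "(0::real) \<in> {0..T}" using T by simp
    have X0: "sgrp d T (X 0)" using X z unfolding sgrm_def sgrp_def by blast
    note A0 = A[OF X0]
    have pm: "path_model (X 0) s t = X s t" if s: "s \<in> {0..T}" and t: "t \<in> {0..T}" for s t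
    proof -
      have X1: "X 0 s [] = 1" using sgrm_grouplike[OF X z s] by (simp add: grouplike_def)
      have "X 0 t = tmul (X 0 s) (X s t)" using X z s t by (simp add: sgrm_def)
      then have "path_model (X 0) s t = tmul (tmul (tinv (X 0 s)) (X 0 s)) (X s t)"
        by (simp add: path_model_def tmul_assoc_fun)
      then show ?thesis using tinv_left[of "X 0 s"] X1 by simp
    qed
    show ?thesis
    proof (intro conjI allI impI)
      show "\<exists>Z. ode_sol d T (\<lambda>t. Tv d v (ddiag T (path_model (X 0)) t)) (Tv d v (X 0 0)) Z"
        using A0 by blast
      fix Z assume Z: "ode_sol d T (\<lambda>t. Tv d v (ddiag T (path_model (X 0)) t)) (Tv d v (X 0 0)) Z"
      have eq0: "\<forall>s\<in>{0..T}. \<forall>t\<in>{0..T}. path_model Z s t = Tv d v (path_model (X 0) s t)"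
        using A0 Z by blast
      have eq: "\<forall>s\<in>{0..T}. \<forall>t\<in>{0..T}. path_model Z s t = Tv d v (X s t)"
      proof (intro ballI)
        fix s t assume s: "s \<in> {0..T}" and t: "t \<in> {0..T}"
        show "path_model Z s t = Tv d v (X s t)" using eq0 s t pm[OF s t] by simp
      qed
      show "\<forall>s\<in>{0..T}. \<forall>t\<in>{0..T}. path_model Z s t = Tv d v (X s t)" by (rule eq)
      show "sgrm d T (path_model Z)"
        by (rule sgrm_cong[OF sgrm_Tv[OF vp X]]) (use eq in blast)
    qed
  qed
  show ?thesis using A B by blast
qed




lemma sgrm_ddiag:
  assumes T: "0 < T" and X: "sgrm d T X" and s: "s \<in> {0..T}"
  shows "((\<lambda>t. X s t w) has_real_derivative ddiag T X s w) (at s within {0..T})"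
proof -
  have "smooth_on {0..T} (\<lambda>t. X s t w)" using X s by (simp add: sgrm_def)
  then obtain g' where "\<forall>t\<in>{0..T}. ((\<lambda>t. X s t w) has_real_derivative g' t) (at t within {0..T})"
    using smooth_deriv by blast
  then have D: "((\<lambda>t. X s t w) has_real_derivative g' s) (at s within {0..T})" using s by blast
  have "ddiag T X s w = g' s" unfolding ddiag_def by (rule the_deriv_Icc[OF T s D])
  then show ?thesis using D by simp
qed

lemma sgrm_unit00:
  assumes X: "sgrm d T X" and z: "0 \<in> {0..T}"
  shows "X 0 0 = tunit"
proof -
  have X1: "X 0 0 [] = 1" using sgrm_grouplike[OF X z z] by (simp add: grouplike_def)
  have m: "tmul (X 0 0) (X 0 0) = X 0 0" using X z by (simp add: sgrm_def)
  have "tmul (tinv (X 0 0)) (tmul (X 0 0) (X 0 0)) = tmul (tmul (tinv (X 0 0)) (X 0 0)) (X 0 0)"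
    by (simp add: tmul_assoc_fun)
  then show ?thesis using m tinv_left[of "X 0 0"] X1 by simp
qed

lemma sgrm_pm0:
  assumes X: "sgrm d T X" and z: "0 \<in> {0..T}" and s: "s \<in> {0..T}" and t: "t \<in> {0..T}"
  shows "tmul (tinv (X 0 s)) (X 0 t) = X s t"
proof -
  have X1: "X 0 s [] = 1" using sgrm_grouplike[OF X z s] by (simp add: grouplike_def)
  have "X 0 t = tmul (X 0 s) (X s t)" using X z s t by (simp add: sgrm_def)
  then have "tmul (tinv (X 0 s)) (X 0 t) = tmul (tmul (tinv (X 0 s)) (X 0 s)) (X s t)"
    by (simp add: tmul_assoc_fun)
  then show ?thesis using tinv_left[of "X 0 s"] X1 by simp
qed

lemma trunc_tunit[simp]: "trunc M tunit = tunit"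
  by (auto simp: trunc_def tunit_def)

lemma TvM_props:
  assumes vok: "vok d v"
  shows "inTN d M (TvM d v M x) \<and>
         TvM d v M (tmulN M x y) = tmulN M (TvM d v M x) (TvM d v M y) \<and>
         TvM d v M (\<lambda>w. a * x w + b * y w) = (\<lambda>w. a * TvM d v M x w + b * TvM d v M y w)"
proof (intro conjI)
  show "inTN d M (TvM d v M x)"
    using tser_Tv[OF vok, of x] by (auto simp: inTN_def TvM_def trunc_def tser_def)
  show "TvM d v M (tmulN M x y) = tmulN M (TvM d v M x) (TvM d v M y)"
    unfolding TvM_def tmulN_def Tv_trunc trunc_tmul Tv_mult[OF vok] ..
  show "TvM d v M (\<lambda>w. a * x w + b * y w) = (\<lambda>w. a * TvM d v M x w + b * TvM d v M y w)"
    by (auto simp: TvM_def trunc_def Tv_lin)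
qed

lemma Nsgrm_trunc_Tv:
  assumes T: "0 < T" and vp: "vprim d v" and X: "sgrm d T X"
  shows "Nsgrm d T L (\<lambda>s t. trunc L (Tv d v (X s t)))"
proof -
  have vok: "vok d v" using vp by (simp add: vprim_def)
  have g: "grouplike d (Tv d v (X s t))" if "s \<in> {0..T}" "t \<in> {0..T}" for s t
    using grouplike_Tv[OF vp sgrm_grouplike[OF X that]] .
  show ?thesis
    unfolding Nsgrm_def
  proof (intro conjI ballI allI impI)
    fix s t assume s: "s \<in> {0..T}" and t: "t \<in> {0..T}"
    show "inTN d L (trunc L (Tv d v (X s t)))"
      using tser_Tv[OF vok, of "X s t"] by (auto simp: inTN_def trunc_def tser_def)
    show "trunc L (Tv d v (X s t)) \<noteq> tzero"
    proof
      assume "trunc L (Tv d v (X s t)) = tzero"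
      then have "trunc L (Tv d v (X s t)) [] = 0" by (simp add: tzero_def)
      then show False using g[OF s t] by (simp add: trunc_def grouplike_def)
    qed
    fix v' w assume v': "v' \<in> words d" and w: "w \<in> words d" and l: "length v' + length w \<le> L"
    show "spair (trunc L (Tv d v (X s t))) v' w = trunc L (Tv d v (X s t)) v' * trunc L (Tv d v (X s t)) w"
      using spair_trunc[OF l, of "Tv d v (X s t)"] g[OF s t] v' w l by (simp add: grouplike_def trunc_def)
  next
    fix s u t assume s: "s \<in> {0..T}" and u: "u \<in> {0..T}" and t: "t \<in> {0..T}"
    show "tmulN L (trunc L (Tv d v (X s u))) (trunc L (Tv d v (X u t))) = trunc L (Tv d v (X s t))"
      unfolding tmulN_def trunc_tmul Tv_mult[OF vok, symmetric] using X s u t by (simp add: sgrm_def)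
  next
    fix s w assume s: "s \<in> {0..T}"
    show "smooth_on {0..T} (\<lambda>t. trunc L (Tv d v (X s t)) w)"
      by (intro smooth_trunc smooth_Tv) (use X s in \<open>auto simp: sgrm_def\<close>)
  qed
qed

lemma ddiag_Tv:
  assumes T: "0 < T" and X: "sgrm d T X" and s: "s \<in> {0..T}"
  shows "ddiag T (\<lambda>s t. Tv d v (X s t)) s = Tv d v (ddiag T X s)"
proof
  fix u
  have "((\<lambda>t. Tv d v (X s t) u) has_real_derivative Tv d v (ddiag T X s) u) (at s within {0..T})"
    by (rule deriv_Tv) (rule sgrm_ddiag[OF T X s])
  then show "ddiag T (\<lambda>s t. Tv d v (X s t)) s u = Tv d v (ddiag T X s) u"
    unfolding ddiag_def by (rule the_deriv_Icc[OF T s])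
qed

lemma part_ii_a:
  assumes T: "0 < T" and vL: "\<forall>i\<in>{1..d}. v i \<in> lie_poly d"
    and X: "sgrm d T X" and G: "good d T X"
  shows "good d T (\<lambda>s t. Tv d v (X s t))"
proof -
  have vp: "vprim d v" using vL lie_poly_series lie_series_vprim by blast
  have vok: "vok d v" using vp by (simp add: vprim_def)
  obtain N Y where Y: "Nsgrm d T N Y" and ME: "is_MinExt d T N Y X" using G by (auto simp: good_def)
  obtain K where K: "vdeg d v K" using vdeg_exists[OF vL] by blast
  define L where "L = N * K"
  have "is_MinExt d T L (\<lambda>s t. trunc L (Tv d v (X s t))) (\<lambda>s t. Tv d v (X s t))"
    unfolding is_MinExt_def
  proof (intro conjI ballI allI impI)
    show "sgrm d T (\<lambda>s t. Tv d v (X s t))" by (rule sgrm_Tv[OF vp X])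
    fix s t and w :: word assume "length w \<le> L"
    then show "Tv d v (X s t) w = trunc L (Tv d v (X s t)) w" by (simp add: trunc_def)
  next
    fix s assume s: "s \<in> {0..T}"
    have "ddiag T X s \<in> lie_truncN d N" using ME s by (simp add: is_MinExt_def)
    then obtain p where p: "p \<in> lie_poly d" and dp: "ddiag T X s = trunc N p"
      by (auto simp: lie_truncN_def)
    define q where "q = trunc N p"
    have q: "q \<in> lie_poly d" using trunc_lie[OF p] by (simp add: q_def)
    have Tq: "Tv d v q \<in> lie_poly d" by (rule Tv_lie[OF vok vL q])
    have "Tv d v q = trunc L (Tv d v q)"
    proof
      fix u :: word
      show "Tv d v q u = trunc L (Tv d v q) u"
      proof (cases "length u \<le> L")
        case True then show ?thesis by (simp add: trunc_def)
      next
        case False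
        then have "Tv d v q u = 0"
          by (intro Tv_deg[OF vok K, of N]) (auto simp: q_def trunc_def L_def)
        then show ?thesis using False by (simp add: trunc_def)
      qed
    qed
    then show "ddiag T (\<lambda>s t. Tv d v (X s t)) s \<in> lie_truncN d L"
      unfolding ddiag_Tv[OF T X s] dp q_def[symmetric] lie_truncN_def using Tq by blast
  qed
  then show ?thesis unfolding good_def using Nsgrm_trunc_Tv[OF T vp X, of L] by blast
qed




lemma part_ii_b:
  assumes T: "0 < T" and vL: "\<forall>i\<in>{1..d}. v i \<in> lie_poly d"
    and Y: "Nsgrm d T N Y" and ME: "is_MinExt d T N Y X"
  shows "(\<forall>x y a b. inTN d M x \<and> inTN d M y \<longrightarrow>
              inTN d M (TvM d v M x) \<and>
              TvM d v M (tmulN M x y) = tmulN M (TvM d v M x) (TvM d v M y) \<and>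
              TvM d v M (\<lambda>w. a * x w + b * y w) = (\<lambda>w. a * TvM d v M x w + b * TvM d v M y w)) \<and>
          TvM d v M tunit = tunit \<and>
          (\<exists>W. ode_solN d T M (\<lambda>t. Tv d v (ddiag T Y t)) tunit W) \<and>
          (\<forall>W. ode_solN d T M (\<lambda>t. Tv d v (ddiag T Y t)) tunit W \<longrightarrow>
             Nsgrp d T M W \<and>
             (\<forall>s\<in>{0..T}. \<forall>t\<in>{0..T}.
                path_modelN M W s t = TvM d v M (trunc M (X s t)) \<and>
                path_modelN M W s t = trunc M (Tv d v (X s t))))"
proof -
  have vp: "vprim d v" using vL lie_poly_series lie_series_vprim by blast
  have vok: "vok d v" using vp by (simp add: vprim_def)
  have X: "sgrm d T X" using ME by (simp add: is_MinExt_def)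
  have z: "(0::real) \<in> {0..T}" using T by simp
  define DX where "DX t = ddiag T X t" for t
  have dX: "((\<lambda>s. X t s w) has_real_derivative DX t w) (at t within {0..T})" if t: "t \<in> {0..T}" for t w
    unfolding DX_def by (rule sgrm_ddiag[OF T X t])
  have DXl: "\<exists>p\<in>lie_poly d. DX t = trunc N p" if t: "t \<in> {0..T}" for t
    using ME t by (auto simp: is_MinExt_def lie_truncN_def DX_def)
  have DX0: "DX t [] = 0" if t: "t \<in> {0..T}" for t
  proof -
    obtain p where p: "p \<in> lie_poly d" "DX t = trunc N p" using DXl[OF t] by blast
    have "p [] = 0" using lie_poly_prim[OF p(1)] by (simp add: prim_def)
    then show ?thesis using p by (simp add: trunc_def)
  qed
  have DXN: "DX t w = 0" if t: "t \<in> {0..T}" and w: "N < length w" for t w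
  proof -
    obtain p where p: "p \<in> lie_poly d" "DX t = trunc N p" using DXl[OF t] by blast
    then show ?thesis using w by (simp add: trunc_def)
  qed
  have ddYX: "ddiag T Y t = DX t" if t: "t \<in> {0..T}" for t
  proof
    fix w :: word
    show "ddiag T Y t w = DX t w"
    proof (cases "length w \<le> N")
      case True
      have "((\<lambda>s. Y t s w) has_real_derivative DX t w) (at t within {0..T})"
        by (rule has_field_derivative_transform_within[OF dX[OF t] zero_less_one t])
           (use ME t True in \<open>auto simp: is_MinExt_def\<close>)
      then show ?thesis unfolding ddiag_def by (rule the_deriv_Icc[OF T t])
    next
      case False
      have "((\<lambda>s. Y t s w) has_real_derivative 0) (at t within {0..T})"
        by (rule has_field_derivative_transform_within[OF DERIV_const zero_less_one t])
           (use Y t False in \<open>auto simp: Nsgrm_def inTN_def\<close>)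
      then have "ddiag T Y t w = 0" unfolding ddiag_def by (rule the_deriv_Icc[OF T t])
      then show ?thesis using DXN[OF t] False by simp
    qed
  qed
  define A where "A t = Tv d v (ddiag T Y t)" for t
  have AX: "A t = Tv d v (DX t)" if "t \<in> {0..T}" for t using ddYX[OF that] by (simp add: A_def)
  have A0: "A t [] = 0" if "t \<in> {0..T}" for t using AX[OF that] DX0[OF that] by simp
  have d0: "((\<lambda>s. X 0 s w) has_real_derivative tmul (X 0 t) (DX t) w) (at t within {0..T})"
    if t: "t \<in> {0..T}" for t w
  proof -
    have "((\<lambda>s. tmul (X 0 t) (X t s) w) has_real_derivative tmul (X 0 t) (DX t) w) (at t within {0..T})"
      by (rule deriv_tmul_left_const) (rule dX[OF t])
    then show ?thesis
      by (rule has_field_derivative_transform_within[OF _ zero_less_one t])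
         (use X z t in \<open>auto simp: sgrm_def\<close>)
  qed
  define W0 where "W0 t = trunc M (Tv d v (X 0 t))" for t
  have dW0: "((\<lambda>s. W0 s w) has_real_derivative tmulN M (W0 t) (A t) w) (at t within {0..T})"
    if t: "t \<in> {0..T}" for t w
  proof (cases "length w \<le> M")
    case True
    have "((\<lambda>s. Tv d v (X 0 s) w) has_real_derivative Tv d v (tmul (X 0 t) (DX t)) w) (at t within {0..T})"
      by (rule deriv_Tv) (rule d0[OF t])
    moreover have "tmulN M (W0 t) (A t) w = Tv d v (tmul (X 0 t) (DX t)) w"
      unfolding W0_def tmulN_def trunc_tmul_left AX[OF t] Tv_mult[OF vok] using True by (simp add: trunc_def)
    ultimately show ?thesis using True by (simp add: W0_def trunc_def)
  next
    case False
    then show ?thesis by (simp add: W0_def tmulN_def trunc_def)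
  qed
  have X00: "X 0 0 = tunit" by (rule sgrm_unit00[OF X z])
  have sol: "ode_solN d T M (\<lambda>t. Tv d v (ddiag T Y t)) tunit W0"
    unfolding ode_solN_def A_def[symmetric]
  proof (intro conjI ballI allI)
    fix t assume t: "t \<in> {0..T}"
    show "inTN d M (W0 t)"
      using tser_Tv[OF vok, of "X 0 t"] by (auto simp: W0_def inTN_def trunc_def tser_def)
    fix w show "((\<lambda>s. W0 s w) has_real_derivative tmulN M (W0 t) (A t) w) (at t within {0..T})"
      by (rule dW0[OF t])
  next
    show "W0 0 = tunit" by (simp add: W0_def X00)
  qed
  have gX: "grouplike d (Tv d v (X 0 t))" if "t \<in> {0..T}" for t
    using grouplike_Tv[OF vp sgrm_grouplike[OF X z that]] .
  have uniq: "\<forall>t\<in>{0..T}. W t = W0 t" if W: "ode_solN d T M (\<lambda>t. Tv d v (ddiag T Y t)) tunit W" for W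
  proof (intro ballI ext)
    fix t w assume t: "t \<in> {0..T}"
    show "W t w = W0 t w"
    proof (cases "length w \<le> M")
      case True
      show ?thesis
      proof (rule ode_unique_gen[of T M W W0 A, OF T _ A0 _ _ t True])
        show "W 0 w' = W0 0 w'" for w' using W sol by (simp add: ode_solN_def)
        show "((\<lambda>s. W s w') has_real_derivative tmul (W t') (A t') w') (at t' within {0..T})"
          if "t' \<in> {0..T}" "length w' \<le> M" for t' w'
        proof -
          have "((\<lambda>s. W s w') has_real_derivative tmulN M (W t') (A t') w') (at t' within {0..T})"
            using W that(1) by (simp add: ode_solN_def A_def)
          then show ?thesis using that(2) by (simp add: tmulN_def trunc_def)
        qed
        show "((\<lambda>s. W0 s w') has_real_derivative tmul (W0 t') (A t') w') (at t' within {0..T})"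
          if "t' \<in> {0..T}" "length w' \<le> M" for t' w'
          using dW0[OF that(1), of w'] that by (simp add: tmulN_def trunc_def)
      qed auto
    next
      case False
      then show ?thesis using W sol t by (auto simp: ode_solN_def inTN_def)
    qed
  qed
  have main: "Nsgrp d T M W \<and>
             (\<forall>s\<in>{0..T}. \<forall>t\<in>{0..T}.
                path_modelN M W s t = TvM d v M (trunc M (X s t)) \<and>
                path_modelN M W s t = trunc M (Tv d v (X s t)))"
    if W: "ode_solN d T M (\<lambda>t. Tv d v (ddiag T Y t)) tunit W" for W
  proof
    have WW: "\<forall>t\<in>{0..T}. W t = W0 t" by (rule uniq[OF W])
    show "Nsgrp d T M W"
      unfolding Nsgrp_def
    proof (intro conjI ballI allI impI)
      fix t assume t: "t \<in> {0..T}"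
      show "inTN d M (W t)" using W t by (simp add: ode_solN_def)
      show "W t \<noteq> tzero"
      proof
        assume "W t = tzero"
        then have "W0 t [] = 0" using WW t by (simp add: tzero_def)
        then show False using gX[OF t] by (simp add: W0_def trunc_def grouplike_def)
      qed
      fix v' w assume v': "v' \<in> words d" and w: "w \<in> words d" and l: "length v' + length w \<le> M"
      show "spair (W t) v' w = W t v' * W t w"
        using spair_trunc[OF l, of "Tv d v (X 0 t)"] gX[OF t] v' w l WW t
        by (simp add: grouplike_def trunc_def W0_def)
    next
      fix w
      show "smooth_on {0..T} (\<lambda>t. W t w)"
        by (rule smooth_transfer[of _ "\<lambda>t. W0 t w"], unfold W0_def, intro smooth_trunc smooth_Tv)
           (use X z WW in \<open>auto simp: sgrm_def W0_def\<close>)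
    qed
    show "\<forall>s\<in>{0..T}. \<forall>t\<in>{0..T}.
                path_modelN M W s t = TvM d v M (trunc M (X s t)) \<and>
                path_modelN M W s t = trunc M (Tv d v (X s t))"
    proof (intro ballI)
      fix s t assume s: "s \<in> {0..T}" and t: "t \<in> {0..T}"
      have X1: "X 0 s [] = 1" using sgrm_grouplike[OF X z s] by (simp add: grouplike_def)
      have "path_modelN M W s t = trunc M (tmul (trunc M (tinv (trunc M (Tv d v (X 0 s))))) (trunc M (Tv d v (X 0 t))))"
        using WW s t by (simp add: path_modelN_def tmulN_def W0_def)
      also have "\<dots> = trunc M (tmul (tinv (Tv d v (X 0 s))) (Tv d v (X 0 t)))"
        unfolding trunc_tinv trunc_tmul ..
      also have "tinv (Tv d v (X 0 s)) = Tv d v (tinv (X 0 s))"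
        using Tv_tinv[of d v "X 0 s", OF vok X1] by simp
      also have "tmul (Tv d v (tinv (X 0 s))) (Tv d v (X 0 t)) = Tv d v (X s t)"
        unfolding Tv_mult[OF vok, symmetric] sgrm_pm0[OF X z s t] ..
      finally have P: "path_modelN M W s t = trunc M (Tv d v (X s t))" .
      moreover have "TvM d v M (trunc M (X s t)) = trunc M (Tv d v (X s t))"
        unfolding TvM_def Tv_trunc ..
      ultimately show "path_modelN M W s t = TvM d v M (trunc M (X s t)) \<and>
                path_modelN M W s t = trunc M (Tv d v (X s t))" by simp
    qed
  qed
  have t1: "TvM d v M tunit = tunit" by (simp add: TvM_def)
  show ?thesis
    using TvM_props[OF vok, of M] sol main t1 by blast
qed



theorem theorem2p24:
  fixes d :: nat and T :: real and v :: "nat \<Rightarrow> tseries"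
  assumes "1 \<le> d" and "0 < T"
  shows
   "((\<forall>i\<in>{1..d}. lie_series d (v i)) \<longrightarrow>
      (\<forall>X. sgrp d T X \<longrightarrow>
         (\<exists>Z. ode_sol d T (\<lambda>t. Tv d v (ddiag T (path_model X) t)) (Tv d v (X 0)) Z) \<and>
         (\<forall>Z. ode_sol d T (\<lambda>t. Tv d v (ddiag T (path_model X) t)) (Tv d v (X 0)) Z \<longrightarrow>
            (\<forall>t\<in>{0..T}. grouplike d (Z t) \<and> Z t = Tv d v (X t)) \<and> sgrp d T Z \<and>
            (\<forall>s\<in>{0..T}. \<forall>t\<in>{0..T}. path_model Z s t = Tv d v (path_model X s t)))) \<and>
      (\<forall>X. sgrm d T X \<longrightarrow>
         (\<exists>Z. ode_sol d T (\<lambda>t. Tv d v (ddiag T (path_model (X 0)) t)) (Tv d v (X 0 0)) Z) \<and>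
         (\<forall>Z. ode_sol d T (\<lambda>t. Tv d v (ddiag T (path_model (X 0)) t)) (Tv d v (X 0 0)) Z \<longrightarrow>
            sgrm d T (path_model Z) \<and>
            (\<forall>s\<in>{0..T}. \<forall>t\<in>{0..T}. path_model Z s t = Tv d v (X s t))))) \<and>
    ((\<forall>i\<in>{1..d}. v i \<in> lie_poly d) \<longrightarrow>
      (\<forall>X. sgrm d T X \<and> good d T X \<longrightarrow> good d T (\<lambda>s t. Tv d v (X s t))) \<and>
      (\<forall>N Y X. Nsgrm d T N Y \<and> is_MinExt d T N Y X \<longrightarrow>
         (let N' = (LEAST n. \<forall>i\<in>{1..d}. v i \<in> lie_truncN d n); M = N * N' in
          (\<forall>x y a b. inTN d M x \<and> inTN d M y \<longrightarrow>
              inTN d M (TvM d v M x) \<and>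
              TvM d v M (tmulN M x y) = tmulN M (TvM d v M x) (TvM d v M y) \<and>
              TvM d v M (\<lambda>w. a * x w + b * y w) = (\<lambda>w. a * TvM d v M x w + b * TvM d v M y w)) \<and>
          TvM d v M tunit = tunit \<and>
          (\<exists>W. ode_solN d T M (\<lambda>t. Tv d v (ddiag T Y t)) tunit W) \<and>
          (\<forall>W. ode_solN d T M (\<lambda>t. Tv d v (ddiag T Y t)) tunit W \<longrightarrow>
             Nsgrp d T M W \<and>
             (\<forall>s\<in>{0..T}. \<forall>t\<in>{0..T}.
                path_modelN M W s t = TvM d v M (trunc M (X s t)) \<and>
                path_modelN M W s t = trunc M (Tv d v (X s t)))))))"
  apply (rule conjI)
   apply (rule impI)
   apply (rule part_i[OF assms(2) lie_series_vprim])
   apply assumption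
  apply (rule impI)
  apply (rule conjI)
   apply (intro allI impI)
   apply (erule conjE)
   apply (rule part_ii_a[OF assms(2)])
     apply assumption+
  apply (intro allI impI)
  apply (erule conjE)
  apply (unfold Let_def)
  apply (rule part_ii_b[OF assms(2)])
    apply assumption+
  done

end
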